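(* Let $n\ge1$ and let $\mathrm{adj}\colon K\dashv N$ be the adjunction between $\mathrm{s}^n\mathcal S$ and $\mathbf{Rel}^n\mathbf{Cat}$. (i) For every $X\in\mathrm{s}^n\mathcal S$, the $n$-relative category $KX$ is completely determined by the $2$-skeleton $\mathrm{sk}_2X$ of $X$; that is, the inclusion $\mathrm{sk}_2X\to X$ induces an isomorphism $K(\mathrm{sk}_2X)\to KX$. (ii) For every $\mathcal C\in\mathbf{Rel}^n\mathbf{Cat}$, $N\mathcal C$ is completely determined by its $2$-skeleton and is its own $2$-coskeleton: for every $Y\in\mathrm{s}^n\mathcal S$, restriction gives a bijection between maps $Y\to N\mathcal C$ and maps $\mathrm{sk}_2Y\to\mathrm{sk}_2N\mathcal C$.
   Context: An $n$-relative category $\mathcal C=(a\mathcal C,v_1\mathcal C,\dots,v_n\mathcal C,w\mathcal C)$ consists of a category $a\mathcal C$ and subcategories $v_1\mathcal C,\dots,v_n\mathcal C,w\mathcal C\subset a\mathcal C$, each containing all objects, with $w\mathcal C\subset v_i\mathcal C$, such that every map of $a\mathcal C$ is a finite composite of maps in the $v_i\mathcal C$, and every relation in $a\mathcal C$ follows from commutativity of squares $y_2x_1=x_2y_1$ with $x_1,x_2\in v_i\mathcal C$, $y_1,y_2\in v_j\mathcal C$. $\mathbf{Rel}^n\mathbf{Cat}$ is the category of small $n$-relative categories and functors of ambient categories preserving $w$ and each $v_i$. For $p\ge0$, $\mathbf p$ is the poset $0\to\cdots\to p$ and $|\mathbf p|$ its discrete subcategory; $\mathbf p_n^{v_n}\times\cdots\times\mathbf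 p_1^{v_1}\times\mathbf q^w$ is the $n$-relative category with ambient category $\mathbf p_n\times\cdots\times\mathbf p_1\times\mathbf q$, $w=|\mathbf p_n|\times\cdots\times|\mathbf p_1|\times\mathbf q$, $v_i=|\mathbf p_n|\times\cdots\times\mathbf p_i\times\cdots\times|\mathbf p_1|\times\mathbf q$. $\mathrm{s}^n\mathcal S$ is the category of $(n+1)$-simplicial sets with multisimplices indexed by $(p_n,\dots,p_1,q)$; $\Delta[p_n,\dots,p_1,q]$ is the standard (representable) multisimplex. $N\mathcal C$ has as $(p_n,\dots,p_1,q)$-simplices the relative functors $\mathbf p_n^{v_n}\times\cdots\times\mathbf p_1^{v_1}\times\mathbf q^w\to\mathcal C$, and $K$ is its left adjoint, the colimit-preserving functor with $K\Delta[p_n,\dots,p_1,q]=\mathbf p_n^{v_n}\times\cdots\times\mathbf p_1^{v_1}\times\mathbf q^w$. A multisimplex of degree $(p_n,\dots,p_1,q)$ has total dimension $p_n+\cdots+p_1+q$; the $2$-skeleton $\mathrm{sk}_2X$ of $X$ is the smallest subobject of $X$ containing all multisimplices of total dimension $\le2$. *)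

theory Defs
  imports Main
begin

record ('o, 'a) cat =
  Ob   :: "'o set"
  Ar   :: "'a set"
  Dom  :: "'a \<Rightarrow> 'o"
  Cod  :: "'a \<Rightarrow> 'o"
  Idn  :: "'o \<Rightarrow> 'a"
  Comp :: "'a \<Rightarrow> 'a \<Rightarrow> 'a"   (* Comp g f = g o f *)

definition is_cat :: "('o, 'a) cat \<Rightarrow> bool" where
  "is_cat C \<longleftrightarrow>
     (\<forall>a\<in>Ob C. Idn C a \<in> Ar C \<and> Dom C (Idn C a) = a \<and> Cod C (Idn C a) = a) \<and>
     (\<forall>f\<in>Ar C. Dom C f \<in> Ob C \<and> Cod C f \<in> Ob C) \<and>
     (\<forall>f\<in>Ar C. \<forall>g\<in>Ar C. Cod C f = Dom C g \<longrightarrow>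
        Comp C g f \<in> Ar C \<and> Dom C (Comp C g f) = Dom C f \<and> Cod C (Comp C g f) = Cod C g) \<and>
     (\<forall>f\<in>Ar C. Comp C f (Idn C (Dom C f)) = f \<and> Comp C (Idn C (Cod C f)) f = f) \<and>
     (\<forall>f\<in>Ar C. \<forall>g\<in>Ar C. \<forall>h\<in>Ar C. Cod C f = Dom C g \<longrightarrow> Cod C g = Dom C h \<longrightarrow>
        Comp C h (Comp C g f) = Comp C (Comp C h g) f)"

definition is_wide_subcat :: "('o, 'a) cat \<Rightarrow> 'a set \<Rightarrow> bool" where
  "is_wide_subcat C S \<longleftrightarrow> S \<subseteq> Ar C \<and> (\<forall>a\<in>Ob C. Idn C a \<in> S) \<and>
     (\<forall>f\<in>S. \<forall>g\<in>S. Cod C f = Dom C g \<longrightarrow> Comp C g f \<in> S)"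

text \<open>Paths (in diagrammatic order) of maps from a set E, from object a to object b,
  and their composites.\<close>
fun cpath :: "('o, 'a) cat \<Rightarrow> 'a set \<Rightarrow> 'o \<Rightarrow> 'o \<Rightarrow> 'a list \<Rightarrow> bool" where
  "cpath C E a b [] \<longleftrightarrow> a = b \<and> a \<in> Ob C"
| "cpath C E a b (f # fs) \<longleftrightarrow> f \<in> E \<and> Dom C f = a \<and> cpath C E (Cod C f) b fs"

fun ceval :: "('o, 'a) cat \<Rightarrow> 'o \<Rightarrow> 'a list \<Rightarrow> 'a" where
  "ceval C a [] = Idn C a"
| "ceval C a (f # fs) = Comp C (ceval C (Cod C f) fs) f"

record ('o, 'a) relcat =
  amb :: "('o, 'a) cat"
  V   :: "nat \<Rightarrow> 'a set"
  W   :: "'a set"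

definition vmaps :: "nat \<Rightarrow> ('o, 'a) relcat \<Rightarrow> 'a set" where
  "vmaps n R = (\<Union>i\<in>{1..n}. V R i)"

definition sq_step :: "nat \<Rightarrow> ('o, 'a) relcat \<Rightarrow> 'o \<Rightarrow> 'o \<Rightarrow> 'a list \<Rightarrow> 'a list \<Rightarrow> bool" where
  "sq_step n R a b p q \<longleftrightarrow>
     cpath (amb R) (vmaps n R) a b p \<and> cpath (amb R) (vmaps n R) a b q \<and>
     (\<exists>us ws.
        (\<exists>c\<in>Ob (amb R). p = us @ [Idn (amb R) c] @ ws \<and> q = us @ ws) \<or>
        (\<exists>i\<in>{1..n}. \<exists>j\<in>{1..n}. \<exists>x1 x2 y1 y2.
           x1 \<in> V R i \<and> x2 \<in> V R i \<and> y1 \<in> V R j \<and> y2 \<in> V R j \<and>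
           Cod (amb R) x1 = Dom (amb R) y2 \<and> Cod (amb R) y1 = Dom (amb R) x2 \<and>
           Comp (amb R) y2 x1 = Comp (amb R) x2 y1 \<and>
           p = us @ [x1, y2] @ ws \<and> q = us @ [y1, x2] @ ws))"

definition path_equiv :: "nat \<Rightarrow> ('o, 'a) relcat \<Rightarrow> 'o \<Rightarrow> 'o \<Rightarrow> 'a list \<Rightarrow> 'a list \<Rightarrow> bool" where
  "path_equiv n R a b = (\<lambda>p q. sq_step n R a b p q \<or> sq_step n R a b q p)\<^sup>*\<^sup>*"

definition is_relcat :: "nat \<Rightarrow> ('o, 'a) relcat \<Rightarrow> bool" where
  "is_relcat n R \<longleftrightarrow>
     is_cat (amb R) \<and>
     (\<forall>i\<in>{1..n}. is_wide_subcat (amb R) (V R i)) \<and>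
     is_wide_subcat (amb R) (W R) \<and>
     (\<forall>i\<in>{1..n}. W R \<subseteq> V R i) \<and>
     (\<forall>f\<in>Ar (amb R). \<exists>fs. cpath (amb R) (vmaps n R) (Dom (amb R) f) (Cod (amb R) f) fs \<and>
                               ceval (amb R) (Dom (amb R) f) fs = f) \<and>
     (\<forall>a b p q. cpath (amb R) (vmaps n R) a b p \<longrightarrow> cpath (amb R) (vmaps n R) a b q \<longrightarrow>
        ceval (amb R) a p = ceval (amb R) a q \<longrightarrow> path_equiv n R a b p q)"

text \<open>Morphisms of Rel^n Cat: functors of ambient categories (given by their action on maps,
  extensional outside the maps) preserving w and each v_i.\<close>
definition is_relfun :: "nat \<Rightarrow> ('o, 'a) relcat \<Rightarrow> ('p, 'b) relcat \<Rightarrow> ('a \<Rightarrow> 'b) \<Rightarrow> bool" where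
  "is_relfun n R S G \<longleftrightarrow>
     (\<forall>f\<in>Ar (amb R). G f \<in> Ar (amb S)) \<and>
     (\<forall>f\<in>Ar (amb R).
        Dom (amb S) (G f) = Dom (amb S) (G (Idn (amb R) (Dom (amb R) f))) \<and>
        Cod (amb S) (G f) = Dom (amb S) (G (Idn (amb R) (Cod (amb R) f)))) \<and>
     (\<forall>a\<in>Ob (amb R). G (Idn (amb R) a) = Idn (amb S) (Dom (amb S) (G (Idn (amb R) a)))) \<and>
     (\<forall>f\<in>Ar (amb R). \<forall>g\<in>Ar (amb R). Cod (amb R) f = Dom (amb R) g \<longrightarrow>
        G (Comp (amb R) g f) = Comp (amb S) (G g) (G f)) \<and>
     (\<forall>f\<in>W R. G f \<in> W S) \<and>
     (\<forall>i\<in>{1..n}. \<forall>f\<in>V R i. G f \<in> V S i) \<and>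
     (\<forall>f. f \<notin> Ar (amb R) \<longrightarrow> G f = undefined)"

definition relid :: "('o, 'a) relcat \<Rightarrow> 'a \<Rightarrow> 'a" where
  "relid R = (\<lambda>f. if f \<in> Ar (amb R) then f else undefined)"

definition relcomp :: "('o, 'a) relcat \<Rightarrow> ('a \<Rightarrow> 'b) \<Rightarrow> ('b \<Rightarrow> 'c) \<Rightarrow> 'a \<Rightarrow> 'c" where
  "relcomp R G H = (\<lambda>f. if f \<in> Ar (amb R) then H (G f) else undefined)"

definition relcat_iso :: "nat \<Rightarrow> ('o, 'a) relcat \<Rightarrow> ('p, 'b) relcat \<Rightarrow> ('a \<Rightarrow> 'b) \<Rightarrow> bool" where
  "relcat_iso n R S G \<longleftrightarrow> is_relfun n R S G \<and>
     (\<exists>H. is_relfun n S R H \<and> relcomp R G H = relid R \<and> relcomp S H G = relid S)"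

text \<open>A multidegree (p_n,...,p_1,q) is encoded as a list d of length n+1 with
  d!0 = q and d!i = p_i for 1 \<le> i \<le> n.  A multisimplicial operator theta : d' \<rightarrow> d is a
  list of n+1 monotone maps theta!k : {0..d'!k} \<rightarrow> {0..d!k}.\<close>

definition is_op :: "nat \<Rightarrow> nat list \<Rightarrow> nat list \<Rightarrow> (nat \<Rightarrow> nat) list \<Rightarrow> bool" where
  "is_op n d' d \<theta> \<longleftrightarrow> length d = Suc n \<and> length d' = Suc n \<and> length \<theta> = Suc n \<and>
     (\<forall>k<Suc n. mono_on {0..d'!k} (\<theta>!k) \<and> (\<theta>!k) ` {0..d'!k} \<subseteq> {0..d!k})"

text \<open>Smp X d is the set of multisimplices of degree d; Act X d d' theta x is theta^* x for
  x of degree d and theta : d' \<rightarrow> d.\<close>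
record 'x msset =
  Smp :: "nat list \<Rightarrow> 'x set"
  Act :: "nat list \<Rightarrow> nat list \<Rightarrow> (nat \<Rightarrow> nat) list \<Rightarrow> 'x \<Rightarrow> 'x"

definition is_msset :: "nat \<Rightarrow> 'x msset \<Rightarrow> bool" where
  "is_msset n X \<longleftrightarrow>
     (\<forall>d. length d \<noteq> Suc n \<longrightarrow> Smp X d = {}) \<and>
     (\<forall>d d' \<theta> x. is_op n d' d \<theta> \<longrightarrow> x \<in> Smp X d \<longrightarrow> Act X d d' \<theta> x \<in> Smp X d') \<and>
     (\<forall>d x. x \<in> Smp X d \<longrightarrow> Act X d d (replicate (Suc n) id) x = x) \<and>
     (\<forall>d d' d'' \<theta> \<phi> x. is_op n d' d \<theta> \<longrightarrow> is_op n d'' d' \<phi> \<longrightarrow> x \<in> Smp X d \<longrightarrow>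
        Act X d' d'' \<phi> (Act X d d' \<theta> x) = Act X d d'' (map2 (\<circ>) \<theta> \<phi>) x) \<and>
     (\<forall>d d' \<theta> \<theta>' x. is_op n d' d \<theta> \<longrightarrow> is_op n d' d \<theta>' \<longrightarrow> x \<in> Smp X d \<longrightarrow>
        (\<forall>k<Suc n. \<forall>m\<le>d'!k. (\<theta>!k) m = (\<theta>'!k) m) \<longrightarrow>
        Act X d d' \<theta> x = Act X d d' \<theta>' x)"

definition is_msmap :: "nat \<Rightarrow> 'x msset \<Rightarrow> 'y msset \<Rightarrow> (nat list \<Rightarrow> 'x \<Rightarrow> 'y) \<Rightarrow> bool" where
  "is_msmap n X Y f \<longleftrightarrow>
     (\<forall>d x. x \<in> Smp X d \<longrightarrow> f d x \<in> Smp Y d) \<and>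
     (\<forall>d d' \<theta> x. is_op n d' d \<theta> \<longrightarrow> x \<in> Smp X d \<longrightarrow>
        f d' (Act X d d' \<theta> x) = Act Y d d' \<theta> (f d x)) \<and>
     (\<forall>d x. x \<notin> Smp X d \<longrightarrow> f d x = undefined)"

definition mshom :: "nat \<Rightarrow> 'x msset \<Rightarrow> 'y msset \<Rightarrow> (nat list \<Rightarrow> 'x \<Rightarrow> 'y) set" where
  "mshom n X Y = {f. is_msmap n X Y f}"

definition msid :: "'x msset \<Rightarrow> nat list \<Rightarrow> 'x \<Rightarrow> 'x" where
  "msid X = (\<lambda>d x. if x \<in> Smp X d then x else undefined)"

definition mscomp :: "'x msset \<Rightarrow> (nat list \<Rightarrow> 'x \<Rightarrow> 'y) \<Rightarrow> (nat list \<Rightarrow> 'y \<Rightarrow> 'z)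
    \<Rightarrow> nat list \<Rightarrow> 'x \<Rightarrow> 'z" where
  "mscomp X f g = (\<lambda>d x. if x \<in> Smp X d then g d (f d x) else undefined)"

definition msrestr :: "'x msset \<Rightarrow> (nat list \<Rightarrow> 'x \<Rightarrow> 'y) \<Rightarrow> nat list \<Rightarrow> 'x \<Rightarrow> 'y" where
  "msrestr X f = (\<lambda>d x. if x \<in> Smp X d then f d x else undefined)"

text \<open>The 2-skeleton: the subobject generated by the multisimplices of total dimension \<le> 2.\<close>
definition sk2 :: "nat \<Rightarrow> 'x msset \<Rightarrow> 'x msset" where
  "sk2 n X = X\<lparr>Smp := (\<lambda>d. {Act X d0 d \<theta> x | d0 \<theta> x.
       sum_list d0 \<le> 2 \<and> x \<in> Smp X d0 \<and> is_op n d d0 \<theta>})\<rparr>"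

text \<open>The category p_n x ... x p_1 x q is the poset of lists s of length n+1 with s!k \<le> d!k;
  a map is a pair (s,t) with s \<le> t componentwise.  It is in w iff s,t agree in all
  coordinates 1..n, and in v_i iff s,t agree in all coordinates 1..n other than i.\<close>
definition vpair :: "nat \<Rightarrow> nat list \<Rightarrow> nat list \<Rightarrow> nat list \<Rightarrow> bool" where
  "vpair n d s t \<longleftrightarrow> length d = Suc n \<and> length s = Suc n \<and> length t = Suc n \<and>
     (\<forall>k<Suc n. s!k \<le> t!k \<and> t!k \<le> d!k)"

definition in_w :: "nat \<Rightarrow> nat list \<Rightarrow> nat list \<Rightarrow> bool" where
  "in_w n s t \<longleftrightarrow> (\<forall>k\<in>{1..n}. s!k = t!k)"

definition in_v :: "nat \<Rightarrow> nat \<Rightarrow> nat list \<Rightarrow> nat list \<Rightarrow> bool" where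
  "in_v n i s t \<longleftrightarrow> (\<forall>k\<in>{1..n}. k \<noteq> i \<longrightarrow> s!k = t!k)"

text \<open>A (p_n,...,p_1,q)-simplex of N C: a relative functor from the multisimplex relative
  category to C, given by its (extensional) action on maps (s,t).\<close>
definition nsimp :: "nat \<Rightarrow> ('o, 'a) relcat \<Rightarrow> nat list \<Rightarrow> (nat list \<times> nat list \<Rightarrow> 'a) \<Rightarrow> bool" where
  "nsimp n R d F \<longleftrightarrow> length d = Suc n \<and>
     (\<forall>s t. vpair n d s t \<longrightarrow> F (s,t) \<in> Ar (amb R) \<and>
        Dom (amb R) (F (s,t)) = Dom (amb R) (F (s,s)) \<and>
        Cod (amb R) (F (s,t)) = Dom (amb R) (F (t,t))) \<and>
     (\<forall>s. vpair n d s s \<longrightarrow> F (s,s) = Idn (amb R) (Dom (amb R) (F (s,s)))) \<and>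
     (\<forall>s t u. vpair n d s t \<longrightarrow> vpair n d t u \<longrightarrow> Comp (amb R) (F (t,u)) (F (s,t)) = F (s,u)) \<and>
     (\<forall>s t. vpair n d s t \<longrightarrow> in_w n s t \<longrightarrow> F (s,t) \<in> W R) \<and>
     (\<forall>i\<in>{1..n}. \<forall>s t. vpair n d s t \<longrightarrow> in_v n i s t \<longrightarrow> F (s,t) \<in> V R i) \<and>
     (\<forall>s t. \<not> vpair n d s t \<longrightarrow> F (s,t) = undefined)"

definition opap :: "(nat \<Rightarrow> nat) list \<Rightarrow> nat list \<Rightarrow> nat list" where
  "opap \<theta> s = map2 (\<lambda>f x. f x) \<theta> s"

definition nerve :: "nat \<Rightarrow> ('o, 'a) relcat \<Rightarrow> (nat list \<times> nat list \<Rightarrow> 'a) msset" where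
  "nerve n R = \<lparr>Smp = (\<lambda>d. {F. nsimp n R d F}),
     Act = (\<lambda>d d' \<theta> F. (\<lambda>(s,t). if vpair n d' s t then F (opap \<theta> s, opap \<theta> t) else undefined))\<rparr>"

definition nmap :: "nat \<Rightarrow> ('o, 'a) relcat \<Rightarrow> ('a \<Rightarrow> 'b)
    \<Rightarrow> nat list \<Rightarrow> (nat list \<times> nat list \<Rightarrow> 'a) \<Rightarrow> (nat list \<times> nat list \<Rightarrow> 'b)" where
  "nmap n R H = (\<lambda>d F. if F \<in> Smp (nerve n R) d
      then (\<lambda>(s,t). if vpair n d s t then H (F (s,t)) else undefined) else undefined)"

text \<open>K (on objects), Km (on maps) together with a bijection Phi between relative functors
  K X \<rightarrow> C and maps X \<rightarrow> N C, natural in X and in C, exhibit K as a left adjoint of N.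
  (Here K X and the test objects C live in a common type.)\<close>
definition is_left_adjoint_of_N :: "nat \<Rightarrow> ('x msset \<Rightarrow> ('o, 'a) relcat)
    \<Rightarrow> ('x msset \<Rightarrow> 'x msset \<Rightarrow> (nat list \<Rightarrow> 'x \<Rightarrow> 'x) \<Rightarrow> 'a \<Rightarrow> 'a)
    \<Rightarrow> ('x msset \<Rightarrow> ('o, 'a) relcat \<Rightarrow> ('a \<Rightarrow> 'a) \<Rightarrow> nat list \<Rightarrow> 'x \<Rightarrow> (nat list \<times> nat list \<Rightarrow> 'a))
    \<Rightarrow> bool" where
  "is_left_adjoint_of_N n K Km \<Phi> \<longleftrightarrow>
     (\<forall>X. is_msset n X \<longrightarrow> is_relcat n (K X)) \<and>
     (\<forall>X Y f. is_msset n X \<longrightarrow> is_msset n Y \<longrightarrow> is_msmap n X Y f \<longrightarrow>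
        is_relfun n (K X) (K Y) (Km X Y f)) \<and>
     (\<forall>X. is_msset n X \<longrightarrow> Km X X (msid X) = relid (K X)) \<and>
     (\<forall>X Y Z f g. is_msset n X \<longrightarrow> is_msset n Y \<longrightarrow> is_msset n Z \<longrightarrow>
        is_msmap n X Y f \<longrightarrow> is_msmap n Y Z g \<longrightarrow>
        Km X Z (mscomp X f g) = relcomp (K X) (Km X Y f) (Km Y Z g)) \<and>
     (\<forall>X C. is_msset n X \<longrightarrow> is_relcat n C \<longrightarrow>
        bij_betw (\<Phi> X C) {G. is_relfun n (K X) C G} (mshom n X (nerve n C))) \<and>
     (\<forall>X Y C f G. is_msset n X \<longrightarrow> is_msset n Y \<longrightarrow> is_relcat n C \<longrightarrow>
        is_msmap n X Y f \<longrightarrow> is_relfun n (K Y) C G \<longrightarrow>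
        \<Phi> X C (relcomp (K X) (Km X Y f) G) = mscomp X f (\<Phi> Y C G)) \<and>
     (\<forall>X C D G H. is_msset n X \<longrightarrow> is_relcat n C \<longrightarrow> is_relcat n D \<longrightarrow>
        is_relfun n (K X) C G \<longrightarrow> is_relfun n C D H \<longrightarrow>
        \<Phi> X D (relcomp (K X) G H) = mscomp X (\<Phi> X C G) (nmap n C H))"

end

theory Submission
  imports Defs
begin


definition vec :: "nat \<Rightarrow> (nat \<Rightarrow> 'a) \<Rightarrow> 'a list" where
  "vec n f = map f [0..<Suc n]"

lemma vec_nth[simp]: "j < Suc n \<Longrightarrow> vec n f ! j = f j"
  by (simp add: vec_def del: upt_Suc)

lemma length_vec[simp]: "length (vec n f) = Suc n"
  by (simp add: vec_def del: upt_Suc)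

definition mix :: "nat \<Rightarrow> nat \<Rightarrow> nat list \<Rightarrow> nat list \<Rightarrow> nat list" where
  "mix n k s t = vec n (\<lambda>j. if j < k then t!j else s!j)"

lemma mix_0: "length s = Suc n \<Longrightarrow> mix n 0 s t = s"
  by (auto simp: mix_def intro!: nth_equalityI)

lemma mix_full: "length t = Suc n \<Longrightarrow> mix n (Suc n) s t = t"
  by (auto simp: mix_def intro!: nth_equalityI)

lemma mix_Suc: "k < Suc n \<Longrightarrow> mix n (Suc k) s t = (mix n k s t)[k := t!k]"
  by (auto simp: mix_def nth_list_update intro!: nth_equalityI)

lemma length_mix[simp]: "length (mix n k s t) = Suc n"
  by (simp add: mix_def)

lemma mix_nth: "j < Suc n \<Longrightarrow> mix n k s t ! j = (if j < k then t!j else s!j)"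
  by (simp add: mix_def)

locale edges =
  fixes R :: "('o,'a) cat" and n :: nat and d :: "nat list"
    and E :: "nat \<Rightarrow> nat list \<Rightarrow> nat \<Rightarrow> 'a" and P :: "nat list \<Rightarrow> 'o"
  assumes cat: "is_cat R"
    and ld: "length d = Suc n"
    and E_arr: "\<And>k v b. length v = Suc n \<Longrightarrow> (\<forall>j<Suc n. v!j \<le> d!j) \<Longrightarrow> k < Suc n \<Longrightarrow> v!k \<le> b \<Longrightarrow> b \<le> d!k
       \<Longrightarrow> E k v b \<in> Ar R \<and> Dom R (E k v b) = P v \<and> Cod R (E k v b) = P (v[k:=b])"
    and E_id: "\<And>k v. length v = Suc n \<Longrightarrow> (\<forall>j<Suc n. v!j \<le> d!j) \<Longrightarrow> k < Suc n \<Longrightarrow> E k v (v!k) = Idn R (P v)"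
    and E_tri: "\<And>k v b c. length v = Suc n \<Longrightarrow> (\<forall>j<Suc n. v!j \<le> d!j) \<Longrightarrow> k < Suc n \<Longrightarrow> v!k \<le> b \<Longrightarrow> b \<le> c \<Longrightarrow> c \<le> d!k
       \<Longrightarrow> Comp R (E k (v[k:=b]) c) (E k v b) = E k v c"
    and E_sq: "\<And>j k v b c. length v = Suc n \<Longrightarrow> (\<forall>i<Suc n. v!i \<le> d!i) \<Longrightarrow> j < Suc n \<Longrightarrow> k < Suc n \<Longrightarrow> j \<noteq> k
       \<Longrightarrow> v!j \<le> b \<Longrightarrow> b \<le> d!j \<Longrightarrow> v!k \<le> c \<Longrightarrow> c \<le> d!k
       \<Longrightarrow> Comp R (E k (v[j:=b]) c) (E j v b) = Comp R (E j (v[k:=c]) b) (E k v c)"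
begin

primrec chain :: "nat \<Rightarrow> nat list \<Rightarrow> nat list \<Rightarrow> 'a" where
  "chain 0 s t = Idn R (P s)"
| "chain (Suc k) s t = Comp R (E k (mix n k s t) (t!k)) (chain k s t)"

definition F where "F s t = chain (Suc n) s t"

lemma cat_facts:
  "\<And>a. a \<in> Ob R \<Longrightarrow> Idn R a \<in> Ar R \<and> Dom R (Idn R a) = a \<and> Cod R (Idn R a) = a"
  "\<And>f. f \<in> Ar R \<Longrightarrow> Dom R f \<in> Ob R \<and> Cod R f \<in> Ob R"
  "\<And>f g. f \<in> Ar R \<Longrightarrow> g \<in> Ar R \<Longrightarrow> Cod R f = Dom R g \<Longrightarrow>
        Comp R g f \<in> Ar R \<and> Dom R (Comp R g f) = Dom R f \<and> Cod R (Comp R g f) = Cod R g"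
  "\<And>f. f \<in> Ar R \<Longrightarrow> Comp R f (Idn R (Dom R f)) = f \<and> Comp R (Idn R (Cod R f)) f = f"
  "\<And>f g h. f \<in> Ar R \<Longrightarrow> g \<in> Ar R \<Longrightarrow> h \<in> Ar R \<Longrightarrow> Cod R f = Dom R g \<Longrightarrow> Cod R g = Dom R h \<Longrightarrow>
        Comp R h (Comp R g f) = Comp R (Comp R h g) f"
  using cat unfolding is_cat_def by blast+

abbreviation "vp s t \<equiv> vpair n d s t"

lemma vp_mix: "vp s t \<Longrightarrow> vp s (mix n k s t) \<and> vp (mix n k s t) t"
  by (auto simp: vpair_def mix_nth)

lemma vp_obj: "vp s t \<Longrightarrow> length s = Suc n \<and> (\<forall>j<Suc n. s!j \<le> d!j) \<and> length t = Suc n \<and> (\<forall>j<Suc n. t!j \<le> d!j)"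
  by (auto simp: vpair_def intro: le_trans)

lemma P_ob: "length v = Suc n \<Longrightarrow> (\<forall>j<Suc n. v!j \<le> d!j) \<Longrightarrow> P v \<in> Ob R"
proof -
  assume a: "length v = Suc n" "\<forall>j<Suc n. v!j \<le> d!j"
  then have "E 0 v (v!0) \<in> Ar R \<and> Dom R (E 0 v (v!0)) = P v" using E_arr[of v 0 "v!0"] by auto
  then show ?thesis using cat_facts(2) by metis
qed

lemma chain_arr: "vp s t \<Longrightarrow> k \<le> Suc n \<Longrightarrow>
  chain k s t \<in> Ar R \<and> Dom R (chain k s t) = P s \<and> Cod R (chain k s t) = P (mix n k s t)"
proof (induction k)
  case 0
  then show ?case using vp_obj[of s t] P_ob[of s] cat_facts(1)[of "P s"] mix_0[of s n t] by auto
next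
  case (Suc k)
  have vm: "vp (mix n k s t) t" using vp_mix Suc by blast
  have e: "E k (mix n k s t) (t!k) \<in> Ar R \<and> Dom R (E k (mix n k s t) (t!k)) = P (mix n k s t)
     \<and> Cod R (E k (mix n k s t) (t!k)) = P ((mix n k s t)[k := t!k])"
    apply (rule E_arr) using vp_obj[OF vm] vm Suc.prems unfolding vpair_def by auto
  show ?case using Suc e cat_facts(3)[of "chain k s t" "E k (mix n k s t) (t!k)"] mix_Suc[of k n s t]
    by auto
qed

abbreviation "ob v \<equiv> length v = Suc n \<and> (\<forall>j<Suc n. v!j \<le> d!j)"

lemma ob_upd: "ob v \<Longrightarrow> j < Suc n \<Longrightarrow> b \<le> d!j \<Longrightarrow> ob (v[j:=b])"
  by (auto simp: nth_list_update)

lemma mix_upd: "k \<le> j \<Longrightarrow> j < Suc n \<Longrightarrow> length v = Suc n \<Longrightarrow> mix n k (v[j:=b]) w = (mix n k v w)[j:=b]"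
  by (auto simp: mix_nth nth_list_update intro!: nth_equalityI)

lemma mix_upd2: "j < k \<Longrightarrow> j < Suc n \<Longrightarrow> length v = Suc n \<Longrightarrow> mix n k (v[j:=b]) w = mix n k v w"
  by (auto simp: mix_nth nth_list_update intro!: nth_equalityI)

lemma L1:
  assumes vw: "vp v w" and j: "j < Suc n" and b: "v!j \<le> b" "b \<le> w!j"
  shows "k \<le> j \<Longrightarrow> Comp R (chain k (v[j:=b]) w) (E j v b) = Comp R (E j (mix n k v w) b) (chain k v w)"
proof (induction k)
  case 0
  have ov: "ob v" using vp_obj[OF vw] by blast
  have bd: "b \<le> d!j" using vw j b unfolding vpair_def by (meson le_trans)
  have e: "E j v b \<in> Ar R \<and> Dom R (E j v b) = P v \<and> Cod R (E j v b) = P (v[j:=b])"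
    using E_arr[of v j b] ov j b bd by auto
  show ?case using e cat_facts(4)[of "E j v b"] mix_0[of v n w] ov by simp
next
  case (Suc k)
  let ?u = "mix n k v w" and ?v' = "v[j:=b]"
  have kj: "k < j" using Suc by simp
  have ov: "ob v" using vp_obj[OF vw] by blast
  have bd: "b \<le> d!j" using vw j b unfolding vpair_def by (meson le_trans)
  have vw': "vp ?v' w" using vw j b unfolding vpair_def by (auto simp: nth_list_update)
  have ou: "ob ?u" using vp_obj vp_mix[OF vw, of k] by blast
  have uj: "?u!j = v!j" using kj j by (simp add: mix_nth)
  have uk: "?u!k = v!k" using kj j by (simp add: mix_nth)
  have vwk: "v!k \<le> w!k" "w!k \<le> d!k" using vw kj j unfolding vpair_def by auto
  have m': "mix n k ?v' w = ?u[j:=b]" using mix_upd[of k j v b w] kj j ov by simp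
  have mS: "mix n (Suc k) v w = ?u[k := w!k]" using mix_Suc[of k n v w] kj j by simp
  have ch: "chain k v w \<in> Ar R \<and> Dom R (chain k v w) = P v \<and> Cod R (chain k v w) = P ?u"
    using chain_arr[OF vw, of k] kj j by simp
  have ch': "chain k ?v' w \<in> Ar R \<and> Dom R (chain k ?v' w) = P ?v' \<and> Cod R (chain k ?v' w) = P (?u[j:=b])"
    using chain_arr[OF vw', of k] kj j m' by simp
  have e: "E j v b \<in> Ar R \<and> Dom R (E j v b) = P v \<and> Cod R (E j v b) = P ?v'"
    using E_arr[of v j b] ov j b bd by auto
  have eu: "E j ?u b \<in> Ar R \<and> Dom R (E j ?u b) = P ?u \<and> Cod R (E j ?u b) = P (?u[j:=b])"
    using E_arr[of ?u j b] ou j b bd uj by auto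
  have ek': "E k (?u[j:=b]) (w!k) \<in> Ar R \<and> Dom R (E k (?u[j:=b]) (w!k)) = P (?u[j:=b])"
    using E_arr[of "?u[j:=b]" k "w!k"] ob_upd[OF ou j bd] kj j uk vwk by (auto simp: nth_list_update)
  have ek: "E k ?u (w!k) \<in> Ar R \<and> Dom R (E k ?u (w!k)) = P ?u \<and> Cod R (E k ?u (w!k)) = P (?u[k:=w!k])"
    using E_arr[of ?u k "w!k"] ou kj j uk vwk by auto
  have eju: "E j (?u[k:=w!k]) b \<in> Ar R \<and> Dom R (E j (?u[k:=w!k]) b) = P (?u[k:=w!k])"
    using E_arr[of "?u[k:=w!k]" j b] ob_upd[OF ou _ vwk(2)] kj j uj b bd by (auto simp: nth_list_update)
  have sq: "Comp R (E k (?u[j:=b]) (w!k)) (E j ?u b) = Comp R (E j (?u[k:=w!k]) b) (E k ?u (w!k))"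
    using E_sq[of ?u j k b "w!k"] ou kj j uj uk b bd vwk by auto
  have "Comp R (chain (Suc k) ?v' w) (E j v b) = Comp R (Comp R (E k (?u[j:=b]) (w!k)) (chain k ?v' w)) (E j v b)"
    using m' by simp
  also have "\<dots> = Comp R (E k (?u[j:=b]) (w!k)) (Comp R (chain k ?v' w) (E j v b))"
    using cat_facts(5) e ch' ek' by metis
  also have "\<dots> = Comp R (E k (?u[j:=b]) (w!k)) (Comp R (E j ?u b) (chain k v w))"
    using Suc kj by simp
  also have "\<dots> = Comp R (Comp R (E k (?u[j:=b]) (w!k)) (E j ?u b)) (chain k v w)"
    using cat_facts(5) ch eu ek' by metis
  also have "\<dots> = Comp R (Comp R (E j (?u[k:=w!k]) b) (E k ?u (w!k))) (chain k v w)"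
    using sq by simp
  also have "\<dots> = Comp R (E j (?u[k:=w!k]) b) (Comp R (E k ?u (w!k)) (chain k v w))"
    using cat_facts(5) ch ek eju by metis
  also have "\<dots> = Comp R (E j (mix n (Suc k) v w) b) (chain (Suc k) v w)"
    using mS by simp
  finally show ?case .
qed

lemma L2:
  assumes vw: "vp v w" and j: "j < Suc n" and b: "v!j \<le> b" "b \<le> w!j"
  shows "Comp R (chain (Suc j) (v[j:=b]) w) (E j v b) = chain (Suc j) v w"
proof -
  let ?u = "mix n j v w" and ?v' = "v[j:=b]"
  have ov: "ob v" using vp_obj[OF vw] by blast
  have bd: "b \<le> d!j" "w!j \<le> d!j" using vw j b unfolding vpair_def by (meson le_trans)+
  have vw': "vp ?v' w" using vw j b unfolding vpair_def by (auto simp: nth_list_update)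
  have ou: "ob ?u" using vp_obj vp_mix[OF vw, of j] by blast
  have uj: "?u!j = v!j" using j by (simp add: mix_nth)
  have m': "mix n j ?v' w = ?u[j:=b]" using mix_upd[of j j v b w] j ov by simp
  have ch: "chain j v w \<in> Ar R \<and> Dom R (chain j v w) = P v \<and> Cod R (chain j v w) = P ?u"
    using chain_arr[OF vw, of j] j by simp
  have ch': "chain j ?v' w \<in> Ar R \<and> Dom R (chain j ?v' w) = P ?v' \<and> Cod R (chain j ?v' w) = P (?u[j:=b])"
    using chain_arr[OF vw', of j] j m' by simp
  have e: "E j v b \<in> Ar R \<and> Dom R (E j v b) = P v \<and> Cod R (E j v b) = P ?v'"
    using E_arr[of v j b] ov j b bd by auto
  have eu: "E j ?u b \<in> Ar R \<and> Dom R (E j ?u b) = P ?u \<and> Cod R (E j ?u b) = P (?u[j:=b])"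
    using E_arr[of ?u j b] ou j b bd uj by auto
  have ej': "E j (?u[j:=b]) (w!j) \<in> Ar R \<and> Dom R (E j (?u[j:=b]) (w!j)) = P (?u[j:=b])"
    using E_arr[of "?u[j:=b]" j "w!j"] ob_upd[OF ou j bd(1)] j b bd by (auto simp: nth_list_update)
  have tri: "Comp R (E j (?u[j:=b]) (w!j)) (E j ?u b) = E j ?u (w!j)"
    using E_tri[of ?u j b "w!j"] ou j uj b bd by auto
  have "Comp R (chain (Suc j) ?v' w) (E j v b) = Comp R (Comp R (E j (?u[j:=b]) (w!j)) (chain j ?v' w)) (E j v b)"
    using m' by simp
  also have "\<dots> = Comp R (E j (?u[j:=b]) (w!j)) (Comp R (chain j ?v' w) (E j v b))"
    using cat_facts(5) e ch' ej' by metis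
  also have "\<dots> = Comp R (E j (?u[j:=b]) (w!j)) (Comp R (E j ?u b) (chain j v w))"
    using L1[OF vw j b, of j] by simp
  also have "\<dots> = Comp R (Comp R (E j (?u[j:=b]) (w!j)) (E j ?u b)) (chain j v w)"
    using cat_facts(5) ch eu ej' by metis
  also have "\<dots> = chain (Suc j) v w"
    using tri by simp
  finally show ?thesis .
qed

lemma L3:
  assumes vw: "vp v w" and j: "j < Suc n" and b: "v!j \<le> b" "b \<le> w!j"
  shows "Suc j + m \<le> Suc n \<Longrightarrow> Comp R (chain (Suc j + m) (v[j:=b]) w) (E j v b) = chain (Suc j + m) v w"
proof (induction m)
  case 0
  then show ?case using L2[OF vw j b] by simp
next
  case (Suc m)
  let ?k = "Suc j + m" and ?v' = "v[j:=b]"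
  have ov: "ob v" using vp_obj[OF vw] by blast
  have bd: "b \<le> d!j" using vw j b unfolding vpair_def by (meson le_trans)
  have vw': "vp ?v' w" using vw j b unfolding vpair_def by (auto simp: nth_list_update)
  have m': "mix n ?k ?v' w = mix n ?k v w" using mix_upd2[of j ?k v b w] j ov by simp
  have k: "?k < Suc n" using Suc by simp
  have ch': "chain ?k ?v' w \<in> Ar R \<and> Dom R (chain ?k ?v' w) = P ?v' \<and> Cod R (chain ?k ?v' w) = P (mix n ?k v w)"
    using chain_arr[OF vw', of ?k] k m' by simp
  have e: "E j v b \<in> Ar R \<and> Dom R (E j v b) = P v \<and> Cod R (E j v b) = P ?v'"
    using E_arr[of v j b] ov j b bd by auto
  have ou: "ob (mix n ?k v w)" using vp_obj vp_mix[OF vw, of ?k] by blast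
  have ek: "E ?k (mix n ?k v w) (w!?k) \<in> Ar R \<and> Dom R (E ?k (mix n ?k v w) (w!?k)) = P (mix n ?k v w)"
    apply (rule conjI)
    using E_arr[of "mix n ?k v w" ?k "w!?k"] ou k vw unfolding vpair_def by (auto simp: mix_nth)
  have "Comp R (chain (Suc j + Suc m) ?v' w) (E j v b) = Comp R (Comp R (E ?k (mix n ?k v w) (w!?k)) (chain ?k ?v' w)) (E j v b)"
    using m' by simp
  also have "\<dots> = Comp R (E ?k (mix n ?k v w) (w!?k)) (Comp R (chain ?k ?v' w) (E j v b))"
    using cat_facts(5) e ch' ek by metis
  also have "\<dots> = chain (Suc j + Suc m) v w"
    using Suc k by simp
  finally show ?case .
qed

lemma Step:
  assumes vw: "vp v w" and j: "j < Suc n" and b: "v!j \<le> b" "b \<le> w!j"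
  shows "Comp R (F (v[j:=b]) w) (E j v b) = F v w"
  using L3[OF vw j b, of "n - j"] j unfolding F_def by simp

lemma F_arr: "vp s t \<Longrightarrow> F s t \<in> Ar R \<and> Dom R (F s t) = P s \<and> Cod R (F s t) = P t"
  using chain_arr[of s t "Suc n"] mix_full[of t n s] vp_obj[of s t] unfolding F_def by auto

lemma funct_gen:
  assumes st: "vp s t" and tu: "vp t u"
  shows "k \<le> Suc n \<Longrightarrow> Comp R (F (mix n k s t) u) (chain k s t) = F s u"
proof (induction k)
  case 0
  have su: "vp s u" using st tu unfolding vpair_def by (auto intro: le_trans)
  show ?case using F_arr[OF su] cat_facts(4)[of "F s u"] mix_0[of s n t] vp_obj[OF st] by simp
next
  case (Suc k)
  let ?m = "mix n k s t"
  have k: "k < Suc n" using Suc by simp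
  have mu: "vp ?m u" using st tu k unfolding vpair_def by (auto simp: mix_nth intro: le_trans)
  have om: "ob ?m" using vp_obj[OF mu] by blast
  have b: "?m!k \<le> t!k" "t!k \<le> u!k" using st tu k unfolding vpair_def by (auto simp: mix_nth)
  have mS: "mix n (Suc k) s t = ?m[k := t!k]" using mix_Suc[of k n s t] k by simp
  have mu': "vp (?m[k:=t!k]) u" using mu k b unfolding vpair_def by (auto simp: nth_list_update)
  have ch: "chain k s t \<in> Ar R \<and> Dom R (chain k s t) = P s \<and> Cod R (chain k s t) = P ?m"
    using chain_arr[OF st, of k] k by simp
  have bd: "t!k \<le> d!k" using tu k unfolding vpair_def by (meson le_trans)
  have e: "E k ?m (t!k) \<in> Ar R \<and> Dom R (E k ?m (t!k)) = P ?m \<and> Cod R (E k ?m (t!k)) = P (?m[k:=t!k])"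
    using E_arr[of ?m k "t!k"] om k b bd by auto
  have f: "F (?m[k:=t!k]) u \<in> Ar R \<and> Dom R (F (?m[k:=t!k]) u) = P (?m[k:=t!k])"
    using F_arr[OF mu'] by simp
  have "Comp R (F (mix n (Suc k) s t) u) (chain (Suc k) s t) = Comp R (F (?m[k:=t!k]) u) (Comp R (E k ?m (t!k)) (chain k s t))"
    using mS by simp
  also have "\<dots> = Comp R (Comp R (F (?m[k:=t!k]) u) (E k ?m (t!k))) (chain k s t)"
    using cat_facts(5) ch e f by metis
  also have "\<dots> = Comp R (F ?m u) (chain k s t)"
    using Step[OF mu k b] by simp
  also have "\<dots> = F s u" using Suc k by simp
  finally show ?case .
qed

lemma funct: "vp s t \<Longrightarrow> vp t u \<Longrightarrow> Comp R (F t u) (F s t) = F s u"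
  using funct_gen[of s t u "Suc n"] mix_full[of t n s] vp_obj[of s t] unfolding F_def[of s t] by simp

lemma chain_diag: "ob s \<Longrightarrow> k \<le> Suc n \<Longrightarrow> chain k s s = Idn R (P s)"
proof (induction k)
  case 0
  then show ?case by simp
next
  case (Suc k)
  have ms: "mix n k s s = s" using Suc by (auto simp: mix_nth intro!: nth_equalityI)
  have "Comp R (Idn R (P s)) (Idn R (P s)) = Idn R (P s)"
    using P_ob[of s] Suc.prems cat_facts(1)[of "P s"] cat_facts(4)[of "Idn R (P s)"] by metis
  then show ?case using Suc ms E_id[of s k] by simp
qed

lemma F_diag: "ob s \<Longrightarrow> F s s = Idn R (P s)"
  unfolding F_def by (rule chain_diag) auto

lemma F_edge: "ob v \<Longrightarrow> k < Suc n \<Longrightarrow> v!k \<le> c \<Longrightarrow> c \<le> d!k \<Longrightarrow> F v (v[k:=c]) = E k v c"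
proof -
  assume a: "ob v" "k < Suc n" "v!k \<le> c" "c \<le> d!k"
  have vv: "vp v (v[k:=c])" using a ld unfolding vpair_def by (auto simp: nth_list_update)
  have ov: "ob (v[k:=c])" using ob_upd a by blast
  have vv2: "vp (v[k:=c]) (v[k:=c])" using ov ld unfolding vpair_def by auto
  have "Comp R (F (v[k:=c]) (v[k:=c])) (E k v c) = F v (v[k:=c])"
    using Step[OF vv a(2) a(3)] a by simp
  moreover have "Comp R (Idn R (P (v[k:=c]))) (E k v c) = E k v c"
    using E_arr[of v k c] a cat_facts(4)[of "E k v c"] by metis
  ultimately show ?thesis using F_diag[OF ov] by simp
qed

lemma chain_in:
  assumes S: "is_wide_subcat R S" and st: "vp s t"
    and J: "\<And>k v b. k \<in> J \<Longrightarrow> ob v \<Longrightarrow> k < Suc n \<Longrightarrow> v!k \<le> b \<Longrightarrow> b \<le> d!k \<Longrightarrow> E k v b \<in> S"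
    and nJ: "\<And>k. k < Suc n \<Longrightarrow> k \<notin> J \<Longrightarrow> s!k = t!k"
  shows "k \<le> Suc n \<Longrightarrow> chain k s t \<in> S"
proof (induction k)
  case 0
  then show ?case using S P_ob[of s] vp_obj[OF st] unfolding is_wide_subcat_def by simp
next
  case (Suc k)
  let ?m = "mix n k s t"
  have k: "k < Suc n" using Suc by simp
  have om: "ob ?m" using vp_obj vp_mix[OF st, of k] by blast
  have b: "?m!k \<le> t!k" "t!k \<le> d!k" using st k unfolding vpair_def by (auto simp: mix_nth)
  have ch: "Cod R (chain k s t) = P ?m"
    using chain_arr[OF st, of k] k by simp
  have e: "Dom R (E k ?m (t!k)) = P ?m" using E_arr[of ?m k "t!k"] om k b by auto
  have eS: "E k ?m (t!k) \<in> S"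
  proof (cases "k \<in> J")
    case True then show ?thesis using J om k b by blast
  next
    case False
    then have "?m!k = t!k" using nJ k by (simp add: mix_nth)
    then have "E k ?m (t!k) = Idn R (P ?m)" using E_id[of ?m k] om k by simp
    then show ?thesis using S P_ob om unfolding is_wide_subcat_def by simp
  qed
  show ?case using Suc k eS ch e S unfolding is_wide_subcat_def by simp
qed

lemma F_in:
  assumes S: "is_wide_subcat R S" and st: "vp s t"
    and J: "\<And>k v b. k \<in> J \<Longrightarrow> ob v \<Longrightarrow> k < Suc n \<Longrightarrow> v!k \<le> b \<Longrightarrow> b \<le> d!k \<Longrightarrow> E k v b \<in> S"
    and nJ: "\<And>k. k < Suc n \<Longrightarrow> k \<notin> J \<Longrightarrow> s!k = t!k"
  shows "F s t \<in> S"
  unfolding F_def using chain_in[OF S st J nJ] by blast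

end


lemma is_opI:
  assumes "length d = Suc n" "length d' = Suc n" "length \<theta> = Suc n"
    and "\<And>k a b. k < Suc n \<Longrightarrow> a \<le> b \<Longrightarrow> b \<le> d'!k \<Longrightarrow> (\<theta>!k) a \<le> (\<theta>!k) b \<and> (\<theta>!k) b \<le> d!k"
  shows "is_op n d' d \<theta>"
  unfolding is_op_def mono_on_def using assms by (auto simp: image_subset_iff) (meson le0)

lemma is_opD:
  assumes "is_op n d' d \<theta>" "k < Suc n" "a \<le> b" "b \<le> d'!k"
  shows "(\<theta>!k) a \<le> (\<theta>!k) b \<and> (\<theta>!k) b \<le> d!k"
  using assms unfolding is_op_def mono_on_def by (auto simp: image_subset_iff)

lemma is_op_len: "is_op n d' d \<theta> \<Longrightarrow> length d = Suc n \<and> length d' = Suc n \<and> length \<theta> = Suc n"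
  unfolding is_op_def by blast

lemma map2_comp_nth: "length \<theta> = Suc n \<Longrightarrow> length \<phi> = Suc n \<Longrightarrow> k < Suc n \<Longrightarrow>
   map2 (\<circ>) \<theta> \<phi> ! k = (\<theta>!k) \<circ> (\<phi>!k)"
  by simp

lemma is_op_comp: "is_op n d' d \<theta> \<Longrightarrow> is_op n d'' d' \<phi> \<Longrightarrow> is_op n d'' d (map2 (\<circ>) \<theta> \<phi>)"
  apply (rule is_opI)
  using is_op_len apply blast
  using is_op_len apply blast
  using is_op_len apply simp
  apply (simp add: is_op_len)
  by (meson is_opD)

lemma opap_nth: "length \<theta> = Suc n \<Longrightarrow> length s = Suc n \<Longrightarrow> j < Suc n \<Longrightarrow> opap \<theta> s ! j = (\<theta>!j) (s!j)"
  by (simp add: opap_def)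

lemma opap_len: "length \<theta> = Suc n \<Longrightarrow> length s = Suc n \<Longrightarrow> length (opap \<theta> s) = Suc n"
  by (simp add: opap_def)

lemma id_op: "length d = Suc n \<Longrightarrow> is_op n d d (replicate (Suc n) id)"
  by (rule is_opI) (auto simp del: replicate_Suc simp add: nth_replicate)

section \<open>skeleton\<close>

lemma msset_len: "is_msset n X \<Longrightarrow> x \<in> Smp X d \<Longrightarrow> length d = Suc n"
  unfolding is_msset_def by blast

lemma msset_act: "is_msset n X \<Longrightarrow> is_op n d' d \<theta> \<Longrightarrow> x \<in> Smp X d \<Longrightarrow> Act X d d' \<theta> x \<in> Smp X d'"
  unfolding is_msset_def by blast

lemma msset_id: "is_msset n X \<Longrightarrow> x \<in> Smp X d \<Longrightarrow> Act X d d (replicate (Suc n) id) x = x"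
  unfolding is_msset_def by blast

lemma msset_comp: "is_msset n X \<Longrightarrow> is_op n d' d \<theta> \<Longrightarrow> is_op n d'' d' \<phi> \<Longrightarrow> x \<in> Smp X d \<Longrightarrow>
        Act X d' d'' \<phi> (Act X d d' \<theta> x) = Act X d d'' (map2 (\<circ>) \<theta> \<phi>) x"
  unfolding is_msset_def by blast

lemma msset_pw: "is_msset n X \<Longrightarrow> is_op n d' d \<theta> \<Longrightarrow> is_op n d' d \<theta>' \<Longrightarrow> x \<in> Smp X d \<Longrightarrow>
        (\<forall>k<Suc n. \<forall>m\<le>d'!k. (\<theta>!k) m = (\<theta>'!k) m) \<Longrightarrow> Act X d d' \<theta> x = Act X d d' \<theta>' x"
  unfolding is_msset_def by blast

lemma sk2_Act[simp]: "Act (sk2 n X) = Act X"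
  by (simp add: sk2_def)

lemma sk2_Smp: "Smp (sk2 n X) d = {Act X d0 d \<theta> x | d0 \<theta> x. sum_list d0 \<le> 2 \<and> x \<in> Smp X d0 \<and> is_op n d d0 \<theta>}"
  by (simp add: sk2_def)

lemma sk2_sub: "is_msset n X \<Longrightarrow> x \<in> Smp (sk2 n X) d \<Longrightarrow> x \<in> Smp X d"
  unfolding sk2_Smp using msset_act[of n X] by auto

lemma sk2_low: "is_msset n X \<Longrightarrow> sum_list d \<le> 2 \<Longrightarrow> x \<in> Smp X d \<Longrightarrow> x \<in> Smp (sk2 n X) d"
  unfolding sk2_Smp using msset_id[of n X x d] id_op[of d n] msset_len[of n X x d]
  by (metis (mono_tags, lifting) mem_Collect_eq)

lemma sk2_act: "is_msset n X \<Longrightarrow> is_op n d' d \<theta> \<Longrightarrow> x \<in> Smp (sk2 n X) d \<Longrightarrow> Act X d d' \<theta> x \<in> Smp (sk2 n X) d'"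
proof -
  assume X: "is_msset n X" and th: "is_op n d' d \<theta>" and x: "x \<in> Smp (sk2 n X) d"
  then obtain d0 \<psi> z where z: "x = Act X d0 d \<psi> z" "sum_list d0 \<le> 2" "z \<in> Smp X d0" "is_op n d d0 \<psi>"
    unfolding sk2_Smp by blast
  have "Act X d d' \<theta> x = Act X d0 d' (map2 (\<circ>) \<psi> \<theta>) z" using msset_comp[OF X z(4) th z(3)] z(1) by simp
  moreover have "is_op n d' d0 (map2 (\<circ>) \<psi> \<theta>)" using is_op_comp z(4) th by blast
  ultimately show ?thesis unfolding sk2_Smp using z by blast
qed

lemma sk2_msset: "is_msset n X \<Longrightarrow> is_msset n (sk2 n X)"
proof -
  assume X: "is_msset n X"
  show ?thesis unfolding is_msset_def sk2_Act
  proof (intro conjI allI impI)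
    fix d :: "nat list" assume "length d \<noteq> Suc n"
    then show "Smp (sk2 n X) d = {}" using sk2_sub[OF X] msset_len[OF X] by blast
  next
    fix d d' \<theta> x assume "is_op n d' d \<theta>" "x \<in> Smp (sk2 n X) d"
    then show "Act X d d' \<theta> x \<in> Smp (sk2 n X) d'" using sk2_act[OF X] by blast
  next
    fix d x assume "x \<in> Smp (sk2 n X) d"
    then show "Act X d d (replicate (Suc n) id) x = x" using sk2_sub[OF X] msset_id[OF X] by blast
  next
    fix d d' d'' \<theta> \<phi> x assume "is_op n d' d \<theta>" "is_op n d'' d' \<phi>" "x \<in> Smp (sk2 n X) d"
    then show "Act X d' d'' \<phi> (Act X d d' \<theta> x) = Act X d d'' (map2 (\<circ>) \<theta> \<phi>) x"
      using sk2_sub[OF X] msset_comp[OF X] by blast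
  next
    fix d d' \<theta> \<theta>' x assume "is_op n d' d \<theta>" "is_op n d' d \<theta>'" "x \<in> Smp (sk2 n X) d"
      "\<forall>k<Suc n. \<forall>m\<le>d' ! k. (\<theta> ! k) m = (\<theta>' ! k) m"
    then show "Act X d d' \<theta> x = Act X d d' \<theta>' x"
      using sk2_sub[OF X] msset_pw[OF X] by blast
  qed
qed

lemma sk2_incl: "is_msset n X \<Longrightarrow> is_msmap n (sk2 n X) X (msid (sk2 n X))"
  unfolding is_msmap_def msid_def using sk2_sub sk2_act by fastforce

section \<open>nerve\<close>

lemma nerve_Smp: "Smp (nerve n C) d = {F. nsimp n C d F}"
  by (simp add: nerve_def)

lemma nerve_Act: "vpair n d' s t \<Longrightarrow> Act (nerve n C) d d' \<theta> F (s,t) = F (opap \<theta> s, opap \<theta> t)"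
  by (simp add: nerve_def)

lemma nerve_Act_out: "\<not> vpair n d' s t \<Longrightarrow> Act (nerve n C) d d' \<theta> F (s,t) = undefined"
  by (simp add: nerve_def)

lemma opap_vpair: "is_op n d' d \<theta> \<Longrightarrow> vpair n d' s t \<Longrightarrow> vpair n d (opap \<theta> s) (opap \<theta> t)"
proof -
  assume th: "is_op n d' d \<theta>" and v: "vpair n d' s t"
  have l: "length d = Suc n" "length \<theta> = Suc n" "length s = Suc n" "length t = Suc n"
    using is_op_len[OF th] v unfolding vpair_def by auto
  have "\<forall>k<Suc n. (\<theta>!k)(s!k) \<le> (\<theta>!k)(t!k) \<and> (\<theta>!k)(t!k) \<le> d!k"
    using is_opD[OF th] v unfolding vpair_def by blast
  then show ?thesis using l unfolding vpair_def by (simp add: opap_len opap_nth)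
qed

lemma nerve_closed: "is_op n d' d \<theta> \<Longrightarrow> nsimp n C d F \<Longrightarrow> nsimp n C d' (Act (nerve n C) d d' \<theta> F)"
proof -
  assume th: "is_op n d' d \<theta>" and F: "nsimp n C d F"
  have l: "length d' = Suc n" "length \<theta> = Suc n" using is_op_len[OF th] by auto
  have vw: "\<And>s t. vpair n d' s t \<Longrightarrow> in_w n s t \<Longrightarrow> in_w n (opap \<theta> s) (opap \<theta> t)"
    unfolding in_w_def vpair_def using l by (auto simp: opap_nth)
  have vv: "\<And>i s t. vpair n d' s t \<Longrightarrow> in_v n i s t \<Longrightarrow> in_v n i (opap \<theta> s) (opap \<theta> t)"
    unfolding in_v_def vpair_def using l by (auto simp: opap_nth)
  have vs: "\<And>s t. vpair n d' s t \<Longrightarrow> vpair n d' s s \<and> vpair n d' t t"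
    unfolding vpair_def by auto
  let ?G = "Act (nerve n C) d d' \<theta> F"
  have F': "\<And>s t. vpair n d s t \<Longrightarrow> F (s,t) \<in> Ar (amb C) \<and>
        Dom (amb C) (F (s,t)) = Dom (amb C) (F (s,s)) \<and> Cod (amb C) (F (s,t)) = Dom (amb C) (F (t,t))"
    "\<And>s. vpair n d s s \<Longrightarrow> F (s,s) = Idn (amb C) (Dom (amb C) (F (s,s)))"
    "\<And>s t u. vpair n d s t \<Longrightarrow> vpair n d t u \<Longrightarrow> Comp (amb C) (F (t,u)) (F (s,t)) = F (s,u)"
    "\<And>s t. vpair n d s t \<Longrightarrow> in_w n s t \<Longrightarrow> F (s,t) \<in> W C"
    "\<And>i s t. i\<in>{1..n} \<Longrightarrow> vpair n d s t \<Longrightarrow> in_v n i s t \<Longrightarrow> F (s,t) \<in> V C i"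
    using F unfolding nsimp_def by blast+
  have c1: "\<And>s t. vpair n d' s t \<Longrightarrow> ?G (s,t) \<in> Ar (amb C) \<and> Dom (amb C) (?G (s,t)) = Dom (amb C) (?G (s,s)) \<and>
         Cod (amb C) (?G (s,t)) = Dom (amb C) (?G (t,t))"
  proof -
    fix s t assume a: "vpair n d' s t"
    have "vpair n d' s s" "vpair n d' t t" using vs[OF a] by auto
    then show "?G (s,t) \<in> Ar (amb C) \<and> Dom (amb C) (?G (s,t)) = Dom (amb C) (?G (s,s)) \<and>
         Cod (amb C) (?G (s,t)) = Dom (amb C) (?G (t,t))"
      using a F'(1)[OF opap_vpair[OF th a]] by (simp add: nerve_Act)
  qed
  have c2: "\<And>s. vpair n d' s s \<Longrightarrow> ?G (s,s) = Idn (amb C) (Dom (amb C) (?G (s,s)))"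
  proof -
    fix s assume a: "vpair n d' s s"
    then show "?G (s,s) = Idn (amb C) (Dom (amb C) (?G (s,s)))"
      using F'(2)[OF opap_vpair[OF th a]] by (simp add: nerve_Act)
  qed
  have c3: "\<And>s t u. vpair n d' s t \<Longrightarrow> vpair n d' t u \<Longrightarrow> Comp (amb C) (?G (t,u)) (?G (s,t)) = ?G (s,u)"
  proof -
    fix s t u assume a: "vpair n d' s t" "vpair n d' t u"
    have "vpair n d' s u" using a unfolding vpair_def by (auto intro: le_trans)
    then show "Comp (amb C) (?G (t,u)) (?G (s,t)) = ?G (s,u)"
      using a F'(3)[OF opap_vpair[OF th a(1)] opap_vpair[OF th a(2)]] by (simp add: nerve_Act)
  qed
  have c4: "\<And>s t. vpair n d' s t \<Longrightarrow> in_w n s t \<Longrightarrow> ?G (s,t) \<in> W C"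
  proof -
    fix s t assume a: "vpair n d' s t" "in_w n s t"
    then show "?G (s,t) \<in> W C" using F'(4)[OF opap_vpair[OF th a(1)] vw[OF a]] by (simp add: nerve_Act)
  qed
  have c5: "\<And>i s t. i \<in> {1..n} \<Longrightarrow> vpair n d' s t \<Longrightarrow> in_v n i s t \<Longrightarrow> ?G (s,t) \<in> V C i"
  proof -
    fix i s t assume a: "i \<in> {1..n}" "vpair n d' s t" "in_v n i s t"
    then show "?G (s,t) \<in> V C i" using F'(5)[OF a(1) opap_vpair[OF th a(2)] vv[OF a(2,3)]] by (simp add: nerve_Act)
  qed
  have c6: "\<And>s t. \<not> vpair n d' s t \<Longrightarrow> ?G (s,t) = undefined" by (simp add: nerve_Act_out)
  show ?thesis unfolding nsimp_def using l c1 c2 c3 c4 c5 c6 by blast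
qed

lemma nsimp_funct: "nsimp n C d F \<Longrightarrow> vpair n d s t \<Longrightarrow> vpair n d t u \<Longrightarrow> Comp (amb C) (F (t,u)) (F (s,t)) = F (s,u)"
  unfolding nsimp_def by blast

lemma nsimp_uniq:
  assumes H1: "nsimp n C d H1" and H2: "nsimp n C d H2"
    and E: "\<And>v k c. k < Suc n \<Longrightarrow> vpair n d v (v[k:=c]) \<Longrightarrow> H1 (v, v[k:=c]) = H2 (v, v[k:=c])"
  shows "H1 = H2"
proof
  fix p :: "nat list \<times> nat list"
  obtain s t where p: "p = (s,t)" by fastforce
  show "H1 p = H2 p"
  proof (cases "vpair n d s t")
    case False
    then show ?thesis using H1 H2 p unfolding nsimp_def by simp
  next
    case True
    have "k \<le> Suc n \<Longrightarrow> H1 (s, mix n k s t) = H2 (s, mix n k s t)" for k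
    proof (induction k)
      case 0
      have "vpair n d s (s[0:=s!0])" using True unfolding vpair_def by (auto intro: le_trans)
      then show ?case using E[of 0 s "s!0"] mix_0[of s n t] True unfolding vpair_def by simp
    next
      case (Suc k)
      have k: "k < Suc n" using Suc by simp
      have m: "mix n (Suc k) s t = (mix n k s t)[k := t!k]" using mix_Suc k by blast
      have v1: "vpair n d s (mix n k s t)" "vpair n d (mix n k s t) (mix n (Suc k) s t)"
        using True k unfolding vpair_def by (auto simp: mix_nth intro: le_trans)
      have "H1 (s, mix n (Suc k) s t) = Comp (amb C) (H1 (mix n k s t, mix n (Suc k) s t)) (H1 (s, mix n k s t))"
        using nsimp_funct[OF H1 v1] by simp
      also have "\<dots> = Comp (amb C) (H2 (mix n k s t, mix n (Suc k) s t)) (H2 (s, mix n k s t))"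
        using Suc k E[of k "mix n k s t" "t!k"] v1 m by simp
      also have "\<dots> = H2 (s, mix n (Suc k) s t)"
        using nsimp_funct[OF H2 v1] by simp
      finally show ?case .
    qed
    then show ?thesis using p mix_full[of t n s] True unfolding vpair_def by (metis order_refl)
  qed
qed



definition uv :: "nat \<Rightarrow> nat \<Rightarrow> nat list" where "uv n k = vec n (\<lambda>j. if j = k then 1 else 0)"
definition z0 :: "nat \<Rightarrow> nat list" where "z0 n = vec n (\<lambda>j. 0)"
definition dv2 :: "nat \<Rightarrow> nat \<Rightarrow> nat list" where "dv2 n k = vec n (\<lambda>j. if j = k then 2 else 0)"
definition dsq :: "nat \<Rightarrow> nat \<Rightarrow> nat \<Rightarrow> nat list" where "dsq n j k = vec n (\<lambda>i. if i = j \<or> i = k then 1 else 0)"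
definition eop :: "nat \<Rightarrow> nat \<Rightarrow> nat list \<Rightarrow> nat \<Rightarrow> (nat \<Rightarrow> nat) list" where
  "eop n k v b = vec n (\<lambda>j. if j = k then (\<lambda>m. if m = 0 then v!j else b) else (\<lambda>_. v!j))"
definition pt :: "nat \<Rightarrow> nat list \<Rightarrow> (nat \<Rightarrow> nat) list" where
  "pt n v = vec n (\<lambda>j _. v!j)"

lemmas vsimps = uv_def z0_def dv2_def dsq_def eop_def pt_def

lemma is_op_vec:
  assumes "length d = Suc n" "length d' = Suc n"
    and "\<And>k a b. k < Suc n \<Longrightarrow> a \<le> b \<Longrightarrow> b \<le> d'!k \<Longrightarrow> f k a \<le> f k b \<and> f k b \<le> d!k"
  shows "is_op n d' d (vec n f)"
  using assms by (intro is_opI) auto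

lemma opap_vec: "length a = Suc n \<Longrightarrow> opap (vec n f) a = vec n (\<lambda>j. f j (a!j))"
  by (auto simp: opap_len opap_nth intro!: nth_equalityI)

lemma opap_vec2: "opap (vec n f) (vec n h) = vec n (\<lambda>j. f j (h j))"
  by (auto simp: opap_len opap_nth intro!: nth_equalityI)

lemma vec_eqI: "(\<And>j. j < Suc n \<Longrightarrow> f j = h j) \<Longrightarrow> vec n f = vec n h"
  unfolding vec_def by (intro map_cong) auto

lemma sum_vec: "sum_list (vec n f) = (\<Sum>j\<in>{0..<Suc n}. f j)"
  unfolding vec_def interv_sum_list_conv_sum_set_nat by (simp only: set_upt)

lemma sum_uv: "k < Suc n \<Longrightarrow> sum_list (uv n k) = 1"
  unfolding uv_def sum_vec by (simp add: sum.delta' del: atLeastLessThanSuc)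
lemma sum_z0: "sum_list (z0 n) = 0"
  unfolding z0_def sum_vec by simp
lemma sum_dv2: "k < Suc n \<Longrightarrow> sum_list (dv2 n k) = 2"
  unfolding dv2_def sum_vec by (simp add: sum.delta' del: atLeastLessThanSuc)
lemma sum_dsq: "j < Suc n \<Longrightarrow> k < Suc n \<Longrightarrow> j \<noteq> k \<Longrightarrow> sum_list (dsq n j k) = 2"
proof -
  assume a: "j < Suc n" "k < Suc n" "j \<noteq> k"
  have "(\<Sum>i\<in>{0..<Suc n}. if i = j \<or> i = k then 1 else 0) = (\<Sum>i\<in>{0..<Suc n}. (if i = j then 1 else 0) + (if i = k then 1 else (0::nat)))"
    using a by (intro sum.cong) auto
  also have "\<dots> = 2" using a by (simp add: sum.distrib sum.delta' del: atLeastLessThanSuc)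
  finally show ?thesis unfolding dsq_def sum_vec .
qed

lemma op_eop: "length d = Suc n \<Longrightarrow> length v = Suc n \<Longrightarrow> (\<forall>j<Suc n. v!j \<le> d!j) \<Longrightarrow> k < Suc n \<Longrightarrow> v!k \<le> b \<Longrightarrow> b \<le> d!k
  \<Longrightarrow> is_op n (uv n k) d (eop n k v b)"
  unfolding uv_def eop_def by (rule is_op_vec) auto

lemma op_pt: "length d = Suc n \<Longrightarrow> length v = Suc n \<Longrightarrow> (\<forall>j<Suc n. v!j \<le> d!j) \<Longrightarrow> is_op n (z0 n) d (pt n v)"
  unfolding z0_def pt_def by (rule is_op_vec) auto

lemma opap_eop0: "length v = Suc n \<Longrightarrow> opap (eop n k v c) (z0 n) = v"
  by (auto simp: eop_def z0_def opap_len opap_nth intro!: nth_equalityI)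

lemma opap_eop1: "length v = Suc n \<Longrightarrow> k < Suc n \<Longrightarrow> opap (eop n k v c) (uv n k) = v[k:=c]"
  by (auto simp: eop_def uv_def opap_len opap_nth nth_list_update intro!: nth_equalityI)

lemma vp_edge: "vpair n (uv n k) (z0 n) (uv n k)"
  unfolding vpair_def uv_def z0_def by auto

lemma sum_uv_le: "k < Suc n \<Longrightarrow> sum_list (uv n k) \<le> 2"
  using sum_uv by simp

locale ctx =
  fixes n :: nat and C :: "('o,'a) relcat" and Y :: "'y msset" and g :: "nat list \<Rightarrow> 'y \<Rightarrow> (nat list \<times> nat list \<Rightarrow> 'a)"
  assumes rc: "is_relcat n C" and Y: "is_msset n Y" and g: "g \<in> mshom n (sk2 n Y) (nerve n C)"
begin

abbreviation "R \<equiv> amb C"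

lemma g_in: "x \<in> Smp (sk2 n Y) d \<Longrightarrow> nsimp n C d (g d x)"
  using g unfolding mshom_def is_msmap_def nerve_Smp by blast

lemma g_nat: "is_op n d' d \<theta> \<Longrightarrow> x \<in> Smp (sk2 n Y) d \<Longrightarrow> g d' (Act Y d d' \<theta> x) = Act (nerve n C) d d' \<theta> (g d x)"
  using g unfolding mshom_def is_msmap_def by simp

lemma low_in: "y \<in> Smp Y d \<Longrightarrow> is_op n d0 d \<theta> \<Longrightarrow> sum_list d0 \<le> 2 \<Longrightarrow> Act Y d d0 \<theta> y \<in> Smp (sk2 n Y) d0"
  using sk2_low[OF Y] msset_act[OF Y] by blast

lemma KL:
  assumes y: "y \<in> Smp Y d" and th: "is_op n d0 d \<theta>" and s2: "sum_list d0 \<le> 2" and ph: "is_op n d1 d0 \<phi>"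
    and ps: "is_op n d1 d \<psi>" and pw: "\<forall>k<Suc n. \<forall>m\<le>d1!k. (\<psi>!k) m = (\<theta>!k) ((\<phi>!k) m)"
    and ab: "vpair n d1 a b"
  shows "g d1 (Act Y d d1 \<psi> y) (a,b) = g d0 (Act Y d d0 \<theta> y) (opap \<phi> a, opap \<phi> b)"
proof -
  have c: "is_op n d1 d (map2 (\<circ>) \<theta> \<phi>)" using is_op_comp th ph by blast
  have l: "length \<theta> = Suc n" "length \<phi> = Suc n" using is_op_len th ph by auto
  have "Act Y d d1 \<psi> y = Act Y d d1 (map2 (\<circ>) \<theta> \<phi>) y"
    using msset_pw[OF Y ps c y] pw l by simp
  also have "\<dots> = Act Y d0 d1 \<phi> (Act Y d d0 \<theta> y)" using msset_comp[OF Y th ph y] by simp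
  finally have e: "Act Y d d1 \<psi> y = Act Y d0 d1 \<phi> (Act Y d d0 \<theta> y)" .
  have z: "Act Y d d0 \<theta> y \<in> Smp (sk2 n Y) d0" using low_in y th s2 by blast
  show ?thesis using e g_nat[OF ph z] nerve_Act[OF ab] by simp
qed

definition edgeval where
  "edgeval d y k v b = g (uv n k) (Act Y d (uv n k) (eop n k v b) y) (z0 n, uv n k)"

definition vert where
  "vert d y v = g (z0 n) (Act Y d (z0 n) (pt n v) y) (z0 n, z0 n)"

definition pobj where "pobj d y v = Dom R (vert d y v)"

lemma nsimpD:
  assumes "nsimp n C d F"
  shows "\<And>s t. vpair n d s t \<Longrightarrow> F (s,t) \<in> Ar R \<and>
        Dom R (F (s,t)) = Dom R (F (s,s)) \<and> Cod R (F (s,t)) = Dom R (F (t,t))"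
    "\<And>s. vpair n d s s \<Longrightarrow> F (s,s) = Idn R (Dom R (F (s,s)))"
    "\<And>s t u. vpair n d s t \<Longrightarrow> vpair n d t u \<Longrightarrow> Comp R (F (t,u)) (F (s,t)) = F (s,u)"
    "\<And>s t. vpair n d s t \<Longrightarrow> in_w n s t \<Longrightarrow> F (s,t) \<in> W C"
    "\<And>i s t. i\<in>{1..n} \<Longrightarrow> vpair n d s t \<Longrightarrow> in_v n i s t \<Longrightarrow> F (s,t) \<in> V C i"
  using assms unfolding nsimp_def by blast+


lemma E_arr:
  assumes y: "y \<in> Smp Y d" and v: "length v = Suc n" "\<forall>j<Suc n. v!j \<le> d!j"
    and k: "k < Suc n" and b: "v!k \<le> b" "b \<le> d!k"
  shows "edgeval d y k v b \<in> Ar R \<and> Dom R (edgeval d y k v b) = pobj d y v \<and>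
         Cod R (edgeval d y k v b) = pobj d y (v[k:=b])"
proof -
  have ld: "length d = Suc n" using msset_len[OF Y y] .
  have th: "is_op n (uv n k) d (eop n k v b)" using op_eop ld v k b by blast
  have s2: "sum_list (uv n k) \<le> 2" using sum_uv k by simp
  let ?G = "g (uv n k) (Act Y d (uv n k) (eop n k v b) y)"
  have Gn: "nsimp n C (uv n k) ?G" using g_in low_in[OF y th s2] by blast
  have vp: "vpair n (uv n k) (z0 n) (uv n k)" "vpair n (uv n k) (z0 n) (z0 n)" "vpair n (uv n k) (uv n k) (uv n k)"
    unfolding vpair_def vsimps by auto
  have vz: "vpair n (z0 n) (z0 n) (z0 n)" unfolding vpair_def vsimps by auto
  have ph0: "is_op n (z0 n) (uv n k) (vec n (\<lambda>_ _. 0))" unfolding vsimps by (rule is_op_vec) auto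
  have ph1: "is_op n (z0 n) (uv n k) (vec n (\<lambda>j _. if j = k then 1 else 0))" unfolding vsimps by (rule is_op_vec) auto
  have lv': "length (v[k:=b]) = Suc n" "\<forall>j<Suc n. v[k:=b]!j \<le> d!j" using v b k by (auto simp: nth_list_update)
  have h1: "vert d y v = ?G (z0 n, z0 n)"
    unfolding vert_def
    using KL[OF y th s2 ph0 op_pt[OF ld v] _ vz] by (simp add: vsimps opap_vec2 cong: if_cong)
  have pw: "\<forall>j<Suc n. \<forall>m\<le>(z0 n)!j. (pt n (v[k:=b]) ! j) m = (eop n k v b ! j) ((vec n (\<lambda>j _. if j = k then 1 else 0) ! j) m)"
    unfolding vsimps using k v by (auto simp: nth_list_update)
  have h2: "vert d y (v[k:=b]) = ?G (uv n k, uv n k)"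
    unfolding vert_def
    using KL[OF y th s2 ph1 op_pt[OF ld lv'] pw vz] k by (simp add: vsimps opap_vec2 cong: if_cong)
  show ?thesis using nsimpD(1)[OF Gn vp(1)] h1 h2 unfolding edgeval_def pobj_def by simp
qed

lemma E_id:
  assumes y: "y \<in> Smp Y d" and v: "length v = Suc n" "\<forall>j<Suc n. v!j \<le> d!j"
    and k: "k < Suc n"
  shows "edgeval d y k v (v!k) = Idn R (pobj d y v)"
proof -
  have ld: "length d = Suc n" using msset_len[OF Y y] .
  have th: "is_op n (z0 n) d (pt n v)" using op_pt ld v by blast
  have s2: "sum_list (z0 n) \<le> 2" unfolding sum_z0 by simp
  let ?H = "g (z0 n) (Act Y d (z0 n) (pt n v) y)"
  have Hn: "nsimp n C (z0 n) ?H" using g_in low_in[OF y th s2] by blast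
  have vp: "vpair n (uv n k) (z0 n) (uv n k)" unfolding vpair_def vsimps by auto
  have vz: "vpair n (z0 n) (z0 n) (z0 n)" unfolding vpair_def vsimps by auto
  have ph0: "is_op n (uv n k) (z0 n) (vec n (\<lambda>_ _. 0))" unfolding vsimps by (rule is_op_vec) auto
  have ps: "is_op n (uv n k) d (eop n k v (v!k))" using op_eop ld v k by blast
  have pw: "\<forall>j<Suc n. \<forall>m\<le>(uv n k)!j. (eop n k v (v!k) ! j) m = (pt n v ! j) ((vec n (\<lambda>_ _. 0) ! j) m)"
    unfolding vsimps by auto
  have "edgeval d y k v (v!k) = ?H (z0 n, z0 n)"
    unfolding edgeval_def using KL[OF y th s2 ph0 ps pw vp] by (simp add: vsimps opap_vec2 cong: if_cong)
  then show ?thesis using nsimpD(2)[OF Hn vz] unfolding pobj_def vert_def by simp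
qed

lemma E_tri:
  assumes y: "y \<in> Smp Y d" and v: "length v = Suc n" "\<forall>j<Suc n. v!j \<le> d!j"
    and k: "k < Suc n" and b: "v!k \<le> b" "b \<le> c" "c \<le> d!k"
  shows "Comp R (edgeval d y k (v[k:=b]) c) (edgeval d y k v b) = edgeval d y k v c"
proof -
  have ld: "length d = Suc n" using msset_len[OF Y y] .
  define \<theta> :: "(nat \<Rightarrow> nat) list" where "\<theta> = vec n (\<lambda>j. if j = k then (\<lambda>m. if m = 0 then v!j else if m = 1 then b else c) else (\<lambda>_. v!j))"
  have th: "is_op n (dv2 n k) d \<theta>" unfolding \<theta>_def dv2_def
    apply (rule is_op_vec) using ld v b by auto
  have s2: "sum_list (dv2 n k) \<le> 2" using sum_dv2 k by simp
  let ?G = "g (dv2 n k) (Act Y d (dv2 n k) \<theta> y)"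
  have Gn: "nsimp n C (dv2 n k) ?G" using g_in low_in[OF y th s2] by blast
  have vp: "vpair n (dv2 n k) (z0 n) (uv n k)" "vpair n (dv2 n k) (uv n k) (dv2 n k)" "vpair n (uv n k) (z0 n) (uv n k)"
    unfolding vpair_def vsimps by auto
  have lv': "length (v[k:=b]) = Suc n" "\<forall>j<Suc n. v[k:=b]!j \<le> d!j" using v b k by (auto simp: nth_list_update)
  have ph1: "is_op n (uv n k) (dv2 n k) (vec n (\<lambda>j m. if j = k then m else 0))" unfolding vsimps by (rule is_op_vec) auto
  have ph2: "is_op n (uv n k) (dv2 n k) (vec n (\<lambda>j m. if j = k then m + 1 else 0))" unfolding vsimps by (rule is_op_vec) auto
  have ph3: "is_op n (uv n k) (dv2 n k) (vec n (\<lambda>j m. if j = k then 2 * m else 0))" unfolding vsimps by (rule is_op_vec) auto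
  have ps1: "is_op n (uv n k) d (eop n k v b)" using op_eop ld v k b by simp
  have ps2: "is_op n (uv n k) d (eop n k (v[k:=b]) c)" using op_eop[OF ld lv' k] k b v by simp
  have ps3: "is_op n (uv n k) d (eop n k v c)" using op_eop ld v k b by simp
  have pw1: "\<forall>j<Suc n. \<forall>m\<le>(uv n k)!j. (eop n k v b ! j) m = (\<theta> ! j) ((vec n (\<lambda>j m. if j = k then m else 0) ! j) m)"
    unfolding vsimps \<theta>_def by auto
  have pw2: "\<forall>j<Suc n. \<forall>m\<le>(uv n k)!j. (eop n k (v[k:=b]) c ! j) m = (\<theta> ! j) ((vec n (\<lambda>j m. if j = k then m + 1 else 0) ! j) m)"
    unfolding vsimps \<theta>_def using k v by (auto simp: nth_list_update)
  have pw3: "\<forall>j<Suc n. \<forall>m\<le>(uv n k)!j. (eop n k v c ! j) m = (\<theta> ! j) ((vec n (\<lambda>j m. if j = k then 2 * m else 0) ! j) m)"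
    unfolding vsimps \<theta>_def by auto
  let ?p1 = "vec n (\<lambda>j m. if j = k then m else (0::nat))"
  let ?p2 = "vec n (\<lambda>j m. if j = k then m + 1 else (0::nat))"
  let ?p3 = "vec n (\<lambda>j m. if j = k then 2 * m else (0::nat))"
  have o: "opap ?p1 (z0 n) = z0 n" "opap ?p1 (uv n k) = uv n k" "opap ?p2 (z0 n) = uv n k"
    "opap ?p2 (uv n k) = dv2 n k" "opap ?p3 (z0 n) = z0 n" "opap ?p3 (uv n k) = dv2 n k"
    unfolding vsimps opap_vec2 by (rule vec_eqI; simp)+
  have e1: "edgeval d y k v b = ?G (z0 n, uv n k)"
    unfolding edgeval_def using KL[OF y th s2 ph1 ps1 pw1 vp(3)] o by simp
  have e2: "edgeval d y k (v[k:=b]) c = ?G (uv n k, dv2 n k)"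
    unfolding edgeval_def using KL[OF y th s2 ph2 ps2 pw2 vp(3)] o by simp
  have e3: "edgeval d y k v c = ?G (z0 n, dv2 n k)"
    unfolding edgeval_def using KL[OF y th s2 ph3 ps3 pw3 vp(3)] o by simp
  show ?thesis using e1 e2 e3 nsimpD(3)[OF Gn vp(1,2)] by simp
qed

lemma E_sq:
  assumes y: "y \<in> Smp Y d" and v: "length v = Suc n" "\<forall>i<Suc n. v!i \<le> d!i"
    and j: "j < Suc n" and k: "k < Suc n" and jk: "j \<noteq> k"
    and b: "v!j \<le> b" "b \<le> d!j" and c: "v!k \<le> c" "c \<le> d!k"
  shows "Comp R (edgeval d y k (v[j:=b]) c) (edgeval d y j v b) = Comp R (edgeval d y j (v[k:=c]) b) (edgeval d y k v c)"
proof -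
  have ld: "length d = Suc n" using msset_len[OF Y y] .
  define \<theta> :: "(nat \<Rightarrow> nat) list" where "\<theta> = vec n (\<lambda>i. if i = j then (\<lambda>m. if m = 0 then v!i else b)
      else if i = k then (\<lambda>m. if m = 0 then v!i else c) else (\<lambda>_. v!i))"
  have th: "is_op n (dsq n j k) d \<theta>" unfolding \<theta>_def dsq_def
    apply (rule is_op_vec) using ld v b c by auto
  have s2: "sum_list (dsq n j k) \<le> 2" using sum_dsq j k jk by simp
  let ?G = "g (dsq n j k) (Act Y d (dsq n j k) \<theta> y)"
  have Gn: "nsimp n C (dsq n j k) ?G" using g_in low_in[OF y th s2] by blast
  have vp: "vpair n (dsq n j k) (z0 n) (uv n j)" "vpair n (dsq n j k) (uv n j) (dsq n j k)"
    "vpair n (dsq n j k) (z0 n) (uv n k)" "vpair n (dsq n j k) (uv n k) (dsq n j k)"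
    "vpair n (uv n j) (z0 n) (uv n j)" "vpair n (uv n k) (z0 n) (uv n k)"
    unfolding vpair_def vsimps by auto
  have lvj: "length (v[j:=b]) = Suc n" "\<forall>i<Suc n. v[j:=b]!i \<le> d!i" using v b j by (auto simp: nth_list_update)
  have lvk: "length (v[k:=c]) = Suc n" "\<forall>i<Suc n. v[k:=c]!i \<le> d!i" using v c k by (auto simp: nth_list_update)
  have pha: "is_op n (uv n j) (dsq n j k) (vec n (\<lambda>i m. if i = j then m else 0))" unfolding vsimps by (rule is_op_vec) auto
  have phb: "is_op n (uv n k) (dsq n j k) (vec n (\<lambda>i m. if i = j then 1 else if i = k then m else 0))" unfolding vsimps by (rule is_op_vec) auto
  have phc: "is_op n (uv n k) (dsq n j k) (vec n (\<lambda>i m. if i = k then m else 0))" unfolding vsimps by (rule is_op_vec) auto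
  have phd: "is_op n (uv n j) (dsq n j k) (vec n (\<lambda>i m. if i = k then 1 else if i = j then m else 0))" unfolding vsimps by (rule is_op_vec) auto
  have psa: "is_op n (uv n j) d (eop n j v b)" using op_eop ld v j b by simp
  have psb: "is_op n (uv n k) d (eop n k (v[j:=b]) c)" using op_eop[OF ld lvj k] jk c by simp
  have psc: "is_op n (uv n k) d (eop n k v c)" using op_eop ld v k c by simp
  have psd: "is_op n (uv n j) d (eop n j (v[k:=c]) b)" using op_eop[OF ld lvk j] jk b by simp
  have pwa: "\<forall>i<Suc n. \<forall>m\<le>(uv n j)!i. (eop n j v b ! i) m = (\<theta> ! i) ((vec n (\<lambda>i m. if i = j then m else 0) ! i) m)"
    unfolding vsimps \<theta>_def by auto
  have pwb: "\<forall>i<Suc n. \<forall>m\<le>(uv n k)!i. (eop n k (v[j:=b]) c ! i) m = (\<theta> ! i) ((vec n (\<lambda>i m. if i = j then 1 else if i = k then m else 0) ! i) m)"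
    unfolding vsimps \<theta>_def using jk j v by (auto simp: nth_list_update)
  have pwc: "\<forall>i<Suc n. \<forall>m\<le>(uv n k)!i. (eop n k v c ! i) m = (\<theta> ! i) ((vec n (\<lambda>i m. if i = k then m else 0) ! i) m)"
    unfolding vsimps \<theta>_def using jk by auto
  have pwd: "\<forall>i<Suc n. \<forall>m\<le>(uv n j)!i. (eop n j (v[k:=c]) b ! i) m = (\<theta> ! i) ((vec n (\<lambda>i m. if i = k then 1 else if i = j then m else 0) ! i) m)"
    unfolding vsimps \<theta>_def using jk k v by (auto simp: nth_list_update)
  let ?pa = "vec n (\<lambda>i m. if i = j then m else (0::nat))"
  let ?pb = "vec n (\<lambda>i m. if i = j then 1 else if i = k then m else (0::nat))"
  let ?pc = "vec n (\<lambda>i m. if i = k then m else (0::nat))"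
  let ?pd = "vec n (\<lambda>i m. if i = k then 1 else if i = j then m else (0::nat))"
  have o: "opap ?pa (z0 n) = z0 n" "opap ?pa (uv n j) = uv n j" "opap ?pb (z0 n) = uv n j"
    "opap ?pb (uv n k) = dsq n j k" "opap ?pc (z0 n) = z0 n" "opap ?pc (uv n k) = uv n k"
    "opap ?pd (z0 n) = uv n k" "opap ?pd (uv n j) = dsq n j k"
    unfolding vsimps opap_vec2 by (rule vec_eqI; auto)+
  have ea: "edgeval d y j v b = ?G (z0 n, uv n j)"
    unfolding edgeval_def using KL[OF y th s2 pha psa pwa vp(5)] o by simp
  have eb: "edgeval d y k (v[j:=b]) c = ?G (uv n j, dsq n j k)"
    unfolding edgeval_def using KL[OF y th s2 phb psb pwb vp(6)] o by simp
  have ec: "edgeval d y k v c = ?G (z0 n, uv n k)"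
    unfolding edgeval_def using KL[OF y th s2 phc psc pwc vp(6)] o by simp
  have ed: "edgeval d y j (v[k:=c]) b = ?G (uv n k, dsq n j k)"
    unfolding edgeval_def using KL[OF y th s2 phd psd pwd vp(5)] o by simp
  show ?thesis using ea eb ec ed nsimpD(3)[OF Gn vp(1,2)] nsimpD(3)[OF Gn vp(3,4)] by simp
qed

lemma edges_y: "y \<in> Smp Y d \<Longrightarrow> edges R n d (edgeval d y) (pobj d y)"
  apply (unfold_locales)
  using rc unfolding is_relcat_def apply blast
  using msset_len[OF Y] apply blast
  using E_arr apply blast
  using E_id apply blast
  using E_tri apply blast
  using E_sq by blast

lemma relcat_facts:
  "is_cat R" "is_wide_subcat R (W C)" "\<And>i. i \<in> {1..n} \<Longrightarrow> is_wide_subcat R (V C i)"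
  "\<And>i. i \<in> {1..n} \<Longrightarrow> W C \<subseteq> V C i"
  using rc unfolding is_relcat_def by blast+

lemma edge_G:
  assumes y: "y \<in> Smp Y d" and v: "length v = Suc n" "\<forall>j<Suc n. v!j \<le> d!j"
    and k: "k < Suc n" and b: "v!k \<le> b" "b \<le> d!k"
  shows "nsimp n C (uv n k) (g (uv n k) (Act Y d (uv n k) (eop n k v b) y))"
  using g_in low_in[OF y op_eop[OF msset_len[OF Y y] v k b] sum_uv_le[OF k]] by blast

lemma edge_W:
  assumes y: "y \<in> Smp Y d" and v: "length v = Suc n" "\<forall>j<Suc n. v!j \<le> d!j"
    and b: "v!0 \<le> b" "b \<le> d!0"
  shows "edgeval d y 0 v b \<in> W C"
proof -
  have "in_w n (z0 n) (uv n 0)" unfolding in_w_def vsimps by auto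
  then show ?thesis using nsimpD(4)[OF edge_G[OF y v _ b] vp_edge] unfolding edgeval_def by simp
qed

lemma edge_V:
  assumes y: "y \<in> Smp Y d" and v: "length v = Suc n" "\<forall>j<Suc n. v!j \<le> d!j"
    and i: "i \<in> {1..n}" and b: "v!i \<le> b" "b \<le> d!i"
  shows "edgeval d y i v b \<in> V C i"
proof -
  have ii: "i < Suc n" using i by simp
  have "in_v n i (z0 n) (uv n i)" unfolding in_v_def vsimps by auto
  then show ?thesis using nsimpD(5)[OF edge_G[OF y v ii b] i vp_edge] unfolding edgeval_def by simp
qed

definition Fy where
  "Fy d y = (\<lambda>(s,t). if vpair n d s t then edges.F R n (edgeval d y) (pobj d y) s t else undefined)"

definition fext where
  "fext d y = (if y \<in> Smp Y d then Fy d y else undefined)"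

lemma Fy_val: "vpair n d s t \<Longrightarrow> Fy d y (s,t) = edges.F R n (edgeval d y) (pobj d y) s t"
  by (simp add: Fy_def)

lemma Fy_nsimp:
  assumes y: "y \<in> Smp Y d"
  shows "nsimp n C d (Fy d y)"
proof -
  interpret I: edges R n d "edgeval d y" "pobj d y" using edges_y[OF y] .
  have ld: "length d = Suc n" using msset_len[OF Y y] .
  have c1: "\<And>s t. vpair n d s t \<Longrightarrow> Fy d y (s,t) \<in> Ar R \<and> Dom R (Fy d y (s,t)) = Dom R (Fy d y (s,s)) \<and>
         Cod R (Fy d y (s,t)) = Dom R (Fy d y (t,t))"
  proof -
    fix s t assume a: "vpair n d s t"
    have b: "vpair n d s s" "vpair n d t t" using a unfolding vpair_def by (auto intro: le_trans)
    have f1: "I.F s t \<in> Ar R \<and> Dom R (I.F s t) = pobj d y s \<and> Cod R (I.F s t) = pobj d y t" by (rule I.F_arr[OF a])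
    have f2: "Dom R (I.F s s) = pobj d y s" using I.F_arr[OF b(1)] by blast
    have f3: "Dom R (I.F t t) = pobj d y t" using I.F_arr[OF b(2)] by blast
    show "Fy d y (s,t) \<in> Ar R \<and> Dom R (Fy d y (s,t)) = Dom R (Fy d y (s,s)) \<and>
         Cod R (Fy d y (s,t)) = Dom R (Fy d y (t,t))"
      unfolding Fy_val[OF a] Fy_val[OF b(1)] Fy_val[OF b(2)] using f1 f2 f3 by simp
  qed
  have c2: "\<And>s. vpair n d s s \<Longrightarrow> Fy d y (s,s) = Idn R (Dom R (Fy d y (s,s)))"
  proof -
    fix s assume a: "vpair n d s s"
    have o: "length s = Suc n \<and> (\<forall>j<Suc n. s!j \<le> d!j)" using I.vp_obj[OF a] by blast
    have f2: "Dom R (I.F s s) = pobj d y s" using I.F_arr[OF a] by blast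
    show "Fy d y (s,s) = Idn R (Dom R (Fy d y (s,s)))"
      unfolding Fy_val[OF a] using I.F_diag[OF o] f2 by simp
  qed
  have c3: "\<And>s t u. vpair n d s t \<Longrightarrow> vpair n d t u \<Longrightarrow> Comp R (Fy d y (t,u)) (Fy d y (s,t)) = Fy d y (s,u)"
  proof -
    fix s t u assume a: "vpair n d s t" "vpair n d t u"
    have b: "vpair n d s u" using a unfolding vpair_def by (auto intro: le_trans)
    show "Comp R (Fy d y (t,u)) (Fy d y (s,t)) = Fy d y (s,u)"
      unfolding Fy_val[OF a(1)] Fy_val[OF a(2)] Fy_val[OF b] by (rule I.funct[OF a])
  qed
  have c4: "\<And>s t. vpair n d s t \<Longrightarrow> in_w n s t \<Longrightarrow> Fy d y (s,t) \<in> W C"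
  proof -
    fix s t assume a: "vpair n d s t" "in_w n s t"
    have J: "\<And>k v b. k \<in> {0} \<Longrightarrow> length v = Suc n \<and> (\<forall>j<Suc n. v!j \<le> d!j) \<Longrightarrow> k < Suc n \<Longrightarrow> v!k \<le> b \<Longrightarrow> b \<le> d!k
       \<Longrightarrow> edgeval d y k v b \<in> W C"
    proof -
      fix k v b assume h: "k \<in> {0}" "length v = Suc n \<and> (\<forall>j<Suc n. v!j \<le> d!j)" "k < Suc n" "v!k \<le> b" "b \<le> d!k"
      then have k0: "k = 0" by simp
      show "edgeval d y k v b \<in> W C" using edge_W[OF y, of v b] h unfolding k0 by simp
    qed
    have nJ: "\<And>k. k < Suc n \<Longrightarrow> k \<notin> {0} \<Longrightarrow> s!k = t!k" using a(2) unfolding in_w_def by simp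
    have "I.F s t \<in> W C" by (rule I.F_in[OF relcat_facts(2) a(1) J nJ])
    then show "Fy d y (s,t) \<in> W C" unfolding Fy_val[OF a(1)] .
  qed
  have c5: "\<And>i s t. i \<in> {1..n} \<Longrightarrow> vpair n d s t \<Longrightarrow> in_v n i s t \<Longrightarrow> Fy d y (s,t) \<in> V C i"
  proof -
    fix i s t assume a: "i \<in> {1..n}" "vpair n d s t" "in_v n i s t"
    have J: "\<And>k v b. k \<in> {0,i} \<Longrightarrow> length v = Suc n \<and> (\<forall>j<Suc n. v!j \<le> d!j) \<Longrightarrow> k < Suc n \<Longrightarrow> v!k \<le> b \<Longrightarrow> b \<le> d!k
       \<Longrightarrow> edgeval d y k v b \<in> V C i"
    proof -
      fix k v b assume h: "k \<in> {0,i}" "length v = Suc n \<and> (\<forall>j<Suc n. v!j \<le> d!j)" "k < Suc n" "v!k \<le> b" "b \<le> d!k"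
      show "edgeval d y k v b \<in> V C i"
      proof (cases "k = 0")
        case True
        then have "edgeval d y k v b \<in> W C" using edge_W[OF y, of v b] h by simp
        then show ?thesis using relcat_facts(4)[OF a(1)] by blast
      next
        case False
        then have "k = i" using h(1) by simp
        then show ?thesis using edge_V[OF y, of v i b] h a(1) by simp
      qed
    qed
    have nJ: "\<And>k. k < Suc n \<Longrightarrow> k \<notin> {0,i} \<Longrightarrow> s!k = t!k" using a(3) unfolding in_v_def by simp
    have "I.F s t \<in> V C i" by (rule I.F_in[OF relcat_facts(3)[OF a(1)] a(2) J nJ])
    then show "Fy d y (s,t) \<in> V C i" unfolding Fy_val[OF a(2)] .
  qed
  have c6: "\<And>s t. \<not> vpair n d s t \<Longrightarrow> Fy d y (s,t) = undefined" by (simp add: Fy_def)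
  show ?thesis unfolding nsimp_def using ld c1 c2 c3 c4 c5 c6 by blast
qed

lemma Fy_edge:
  assumes y: "y \<in> Smp Y d" and k: "k < Suc n" and vp: "vpair n d v (v[k:=c])"
  shows "Fy d y (v, v[k:=c]) = edgeval d y k v c"
proof -
  interpret I: edges R n d "edgeval d y" "pobj d y" using edges_y[OF y] .
  have o: "length v = Suc n \<and> (\<forall>j<Suc n. v!j \<le> d!j)" using I.vp_obj[OF vp] by blast
  have c: "v!k \<le> c" "c \<le> d!k" using vp k o unfolding vpair_def by auto
  show ?thesis unfolding Fy_val[OF vp] using I.F_edge[OF o k c] .
qed

lemma fext_nat:
  assumes th: "is_op n d' d \<theta>" and y: "y \<in> Smp Y d"
  shows "fext d' (Act Y d d' \<theta> y) = Act (nerve n C) d d' \<theta> (fext d y)"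
proof -
  have y': "Act Y d d' \<theta> y \<in> Smp Y d'" using msset_act[OF Y th y] .
  have ld: "length d = Suc n" "length d' = Suc n" "length \<theta> = Suc n" using is_op_len[OF th] by auto
  have n1: "nsimp n C d' (Fy d' (Act Y d d' \<theta> y))" using Fy_nsimp[OF y'] .
  have n2: "nsimp n C d' (Act (nerve n C) d d' \<theta> (Fy d y))" using nerve_closed[OF th Fy_nsimp[OF y]] .
  have "Fy d' (Act Y d d' \<theta> y) = Act (nerve n C) d d' \<theta> (Fy d y)"
  proof (rule nsimp_uniq[OF n1 n2])
    fix u k c assume k: "k < Suc n" and vp: "vpair n d' u (u[k:=c])"
    have lu: "length u = Suc n" "\<forall>j<Suc n. u!j \<le> d'!j" using vp unfolding vpair_def by (auto intro: le_trans)
    have c: "u!k \<le> c" "c \<le> d'!k" using vp k lu unfolding vpair_def by auto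
    let ?w = "opap \<theta> u"
    have ow: "opap \<theta> (u[k:=c]) = ?w[k := (\<theta>!k) c]"
      using ld lu k by (auto simp: opap_len opap_nth nth_list_update intro!: nth_equalityI)
    have vpw: "vpair n d ?w (?w[k := (\<theta>!k) c])" using opap_vpair[OF th vp] ow by simp
    have lw: "length ?w = Suc n" "\<forall>j<Suc n. ?w!j \<le> d!j" using vpw unfolding vpair_def by (auto intro: le_trans)
    have cw: "?w!k \<le> (\<theta>!k) c" "(\<theta>!k) c \<le> d!k" using vpw k lw unfolding vpair_def by auto
    have op1: "is_op n (uv n k) d' (eop n k u c)" using op_eop[OF ld(2) lu k c] .
    have op2: "is_op n (uv n k) d (eop n k ?w ((\<theta>!k) c))" using op_eop[OF ld(1) lw k cw] .
    have opc: "is_op n (uv n k) d (map2 (\<circ>) \<theta> (eop n k u c))" using is_op_comp[OF th op1] .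
    have pw: "\<forall>j<Suc n. \<forall>m\<le>(uv n k)!j. (map2 (\<circ>) \<theta> (eop n k u c) ! j) m = (eop n k ?w ((\<theta>!k) c) ! j) m"
      using ld lu by (auto simp: eop_def uv_def opap_nth)
    have "Act Y d' (uv n k) (eop n k u c) (Act Y d d' \<theta> y) = Act Y d (uv n k) (map2 (\<circ>) \<theta> (eop n k u c)) y"
      using msset_comp[OF Y th op1 y] .
    also have "\<dots> = Act Y d (uv n k) (eop n k ?w ((\<theta>!k) c)) y"
      using msset_pw[OF Y opc op2 y pw] .
    finally have eq: "edgeval d' (Act Y d d' \<theta> y) k u c = edgeval d y k ?w ((\<theta>!k) c)"
      unfolding edgeval_def by simp
    show "Fy d' (Act Y d d' \<theta> y) (u, u[k:=c]) = Act (nerve n C) d d' \<theta> (Fy d y) (u, u[k:=c])"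
      unfolding Fy_edge[OF y' k vp] nerve_Act[OF vp] ow Fy_edge[OF y k vpw] eq ..
  qed
  then show ?thesis unfolding fext_def using y y' by simp
qed

lemma fext_map: "is_msmap n Y (nerve n C) fext"
  unfolding is_msmap_def
proof (intro conjI allI impI)
  fix d x assume "x \<in> Smp Y d"
  then show "fext d x \<in> Smp (nerve n C) d" unfolding fext_def nerve_Smp using Fy_nsimp by simp
next
  fix d d' \<theta> x assume "is_op n d' d \<theta>" "x \<in> Smp Y d"
  then show "fext d' (Act Y d d' \<theta> x) = Act (nerve n C) d d' \<theta> (fext d x)" using fext_nat by blast
next
  fix d x assume "x \<notin> Smp Y d"
  then show "fext d x = undefined" unfolding fext_def by simp
qed

lemma fext_restr: "msrestr (sk2 n Y) fext = g"
proof (rule ext, rule ext)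
  fix d x
  show "msrestr (sk2 n Y) fext d x = g d x"
  proof (cases "x \<in> Smp (sk2 n Y) d")
    case False
    then show ?thesis using g unfolding msrestr_def mshom_def is_msmap_def by simp
  next
    case True
    have y: "x \<in> Smp Y d" using sk2_sub[OF Y True] .
    have ld: "length d = Suc n" using msset_len[OF Y y] .
    have "\<And>v k c. k < Suc n \<Longrightarrow> vpair n d v (v[k:=c]) \<Longrightarrow> Fy d x (v, v[k:=c]) = g d x (v, v[k:=c])"
    proof -
      fix v k c assume k: "k < Suc n" and vp: "vpair n d v (v[k:=c])"
      have lv: "length v = Suc n" "\<forall>j<Suc n. v!j \<le> d!j" using vp unfolding vpair_def by (auto intro: le_trans)
      have c: "v!k \<le> c" "c \<le> d!k" using vp k lv unfolding vpair_def by auto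
      have op: "is_op n (uv n k) d (eop n k v c)" using op_eop[OF ld lv k c] .
      show "Fy d x (v, v[k:=c]) = g d x (v, v[k:=c])"
        unfolding Fy_edge[OF y k vp] edgeval_def g_nat[OF op True] nerve_Act[OF vp_edge]
          opap_eop0[OF lv(1)] opap_eop1[OF lv(1) k] ..
    qed
    then have "Fy d x = g d x" by (rule nsimp_uniq[OF Fy_nsimp[OF y] g_in[OF True]])
    then show ?thesis unfolding msrestr_def fext_def using True y by simp
  qed
qed

end

lemma EXT:
  assumes "is_relcat n C" "is_msset n Y" "g \<in> mshom n (sk2 n Y) (nerve n C)"
  shows "\<exists>f\<in>mshom n Y (nerve n C). msrestr (sk2 n Y) f = g"
proof -
  interpret ctx n C Y g using assms by unfold_locales
  show ?thesis using fext_map fext_restr unfolding mshom_def by blast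
qed

lemma UNIQ:
  assumes Y: "is_msset n Y" and f1: "f1 \<in> mshom n Y (nerve n C)" and f2: "f2 \<in> mshom n Y (nerve n C)"
    and eq: "msrestr (sk2 n Y) f1 = msrestr (sk2 n Y) f2"
  shows "f1 = f2"
proof (rule ext, rule ext)
  fix d y
  show "f1 d y = f2 d y"
  proof (cases "y \<in> Smp Y d")
    case False
    then show ?thesis using f1 f2 unfolding mshom_def is_msmap_def by simp
  next
    case True
    have ld: "length d = Suc n" using msset_len[OF Y True] .
    have n1: "nsimp n C d (f1 d y)" using f1 True unfolding mshom_def is_msmap_def nerve_Smp by blast
    have n2: "nsimp n C d (f2 d y)" using f2 True unfolding mshom_def is_msmap_def nerve_Smp by blast
    have "\<And>v k c. k < Suc n \<Longrightarrow> vpair n d v (v[k:=c]) \<Longrightarrow> f1 d y (v, v[k:=c]) = f2 d y (v, v[k:=c])"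
    proof -
      fix v k c assume k: "k < Suc n" and vp: "vpair n d v (v[k:=c])"
      have lv: "length v = Suc n" "\<forall>j<Suc n. v!j \<le> d!j" using vp unfolding vpair_def by (auto intro: le_trans)
      have c: "v!k \<le> c" "c \<le> d!k" using vp k lv unfolding vpair_def by auto
      have op: "is_op n (uv n k) d (eop n k v c)" using op_eop[OF ld lv k c] .
      have z: "Act Y d (uv n k) (eop n k v c) y \<in> Smp (sk2 n Y) (uv n k)"
        using sk2_low[OF Y sum_uv_le[OF k] msset_act[OF Y op True]] .
      have nat1: "f1 (uv n k) (Act Y d (uv n k) (eop n k v c) y) = Act (nerve n C) d (uv n k) (eop n k v c) (f1 d y)"
        using f1 op True unfolding mshom_def is_msmap_def by blast
      have nat2: "f2 (uv n k) (Act Y d (uv n k) (eop n k v c) y) = Act (nerve n C) d (uv n k) (eop n k v c) (f2 d y)"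
        using f2 op True unfolding mshom_def is_msmap_def by blast
      have "f1 (uv n k) (Act Y d (uv n k) (eop n k v c) y) = f2 (uv n k) (Act Y d (uv n k) (eop n k v c) y)"
        using fun_cong[OF fun_cong[OF eq, of "uv n k"], of "Act Y d (uv n k) (eop n k v c) y"] z
        unfolding msrestr_def by simp
      then have "Act (nerve n C) d (uv n k) (eop n k v c) (f1 d y) (z0 n, uv n k) =
                 Act (nerve n C) d (uv n k) (eop n k v c) (f2 d y) (z0 n, uv n k)"
        using nat1 nat2 by simp
      then show "f1 d y (v, v[k:=c]) = f2 d y (v, v[k:=c])"
        unfolding nerve_Act[OF vp_edge] opap_eop0[OF lv(1)] opap_eop1[OF lv(1) k] .
    qed
    then show ?thesis by (rule nsimp_uniq[OF n1 n2])
  qed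
qed

lemma restr_maps:
  assumes Y: "is_msset n Y" and f: "f \<in> mshom n Y (nerve n C)"
  shows "msrestr (sk2 n Y) f \<in> mshom n (sk2 n Y) (sk2 n (nerve n C))"
  unfolding mshom_def is_msmap_def mem_Collect_eq sk2_Act
proof (intro conjI allI impI)
  fix d x assume x: "x \<in> Smp (sk2 n Y) d"
  then obtain d0 \<theta> x0 where z: "x = Act Y d0 d \<theta> x0" "sum_list d0 \<le> 2" "x0 \<in> Smp Y d0" "is_op n d d0 \<theta>"
    unfolding sk2_Smp by blast
  have "f d x = Act (nerve n C) d0 d \<theta> (f d0 x0)" using f z unfolding mshom_def is_msmap_def by blast
  moreover have "f d0 x0 \<in> Smp (nerve n C) d0" using f z unfolding mshom_def is_msmap_def by blast
  ultimately show "msrestr (sk2 n Y) f d x \<in> Smp (sk2 n (nerve n C)) d"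
    unfolding msrestr_def sk2_Smp using x z by auto
next
  fix d d' \<theta> x assume th: "is_op n d' d \<theta>" and x: "x \<in> Smp (sk2 n Y) d"
  have x': "Act Y d d' \<theta> x \<in> Smp (sk2 n Y) d'" using sk2_act[OF Y th x] .
  have "f d' (Act Y d d' \<theta> x) = Act (nerve n C) d d' \<theta> (f d x)"
    using f th sk2_sub[OF Y x] unfolding mshom_def is_msmap_def by blast
  then show "msrestr (sk2 n Y) f d' (Act Y d d' \<theta> x) = Act (nerve n C) d d' \<theta> (msrestr (sk2 n Y) f d x)"
    unfolding msrestr_def using x x' by simp
next
  fix d x assume "x \<notin> Smp (sk2 n Y) d"
  then show "msrestr (sk2 n Y) f d x = undefined" unfolding msrestr_def by simp
qed

lemma sk2_nerve_sub: "Smp (sk2 n (nerve n C)) d \<subseteq> Smp (nerve n C) d"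
  unfolding sk2_Smp nerve_Smp using nerve_closed by fastforce

lemma mshom_sk2_nerve: "g \<in> mshom n (sk2 n Y) (sk2 n (nerve n C)) \<Longrightarrow> g \<in> mshom n (sk2 n Y) (nerve n C)"
  unfolding mshom_def is_msmap_def using sk2_nerve_sub by (simp add: sk2_Act) blast

theorem part2:
  assumes "is_relcat n C" "is_msset n Y"
  shows "bij_betw (msrestr (sk2 n Y)) (mshom n Y (nerve n C)) (mshom n (sk2 n Y) (sk2 n (nerve n C)))"
  unfolding bij_betw_def
proof
  show "inj_on (msrestr (sk2 n Y)) (mshom n Y (nerve n C))"
    using UNIQ[OF assms(2)] unfolding inj_on_def by blast
next
  show "msrestr (sk2 n Y) ` mshom n Y (nerve n C) = mshom n (sk2 n Y) (sk2 n (nerve n C))"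
  proof
    show "msrestr (sk2 n Y) ` mshom n Y (nerve n C) \<subseteq> mshom n (sk2 n Y) (sk2 n (nerve n C))"
      using restr_maps[OF assms(2)] by blast
  next
    show "mshom n (sk2 n Y) (sk2 n (nerve n C)) \<subseteq> msrestr (sk2 n Y) ` mshom n Y (nerve n C)"
      using EXT[OF assms] mshom_sk2_nerve by (metis image_eqI subsetI)
  qed
qed

lemma msid_map: "is_msset n X \<Longrightarrow> is_msmap n X X (msid X)"
  unfolding is_msmap_def msid_def using msset_act by fastforce

lemma mscomp_msid: "mscomp S (msid S) h = msrestr S h"
  by (rule ext, rule ext) (simp add: mscomp_def msid_def msrestr_def)

lemma relfunD:
  assumes "is_relfun n R S G"
  shows "\<And>f. f\<in>Ar (amb R) \<Longrightarrow> G f \<in> Ar (amb S)"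
    "\<And>f. f\<in>Ar (amb R) \<Longrightarrow> Dom (amb S) (G f) = Dom (amb S) (G (Idn (amb R) (Dom (amb R) f)))"
    "\<And>f. f\<in>Ar (amb R) \<Longrightarrow> Cod (amb S) (G f) = Dom (amb S) (G (Idn (amb R) (Cod (amb R) f)))"
    "\<And>a. a\<in>Ob (amb R) \<Longrightarrow> G (Idn (amb R) a) = Idn (amb S) (Dom (amb S) (G (Idn (amb R) a)))"
    "\<And>f g. f\<in>Ar (amb R) \<Longrightarrow> g\<in>Ar (amb R) \<Longrightarrow> Cod (amb R) f = Dom (amb R) g \<Longrightarrow>
        G (Comp (amb R) g f) = Comp (amb S) (G g) (G f)"
    "\<And>f. f\<in>W R \<Longrightarrow> G f \<in> W S"
    "\<And>i f. i\<in>{1..n} \<Longrightarrow> f\<in>V R i \<Longrightarrow> G f \<in> V S i"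
    "\<And>f. f \<notin> Ar (amb R) \<Longrightarrow> G f = undefined"
  using assms unfolding is_relfun_def by blast+

lemma relcomp_relfun:
  assumes cR: "is_cat (amb R)" and cS: "is_cat (amb S)"
    and G: "is_relfun n R S G" and H: "is_relfun n S T H"
    and WR: "W R \<subseteq> Ar (amb R)" and VR: "\<forall>i\<in>{1..n}. V R i \<subseteq> Ar (amb R)"
    and WS: "W S \<subseteq> Ar (amb S)" and VS: "\<forall>i\<in>{1..n}. V S i \<subseteq> Ar (amb S)"
  shows "is_relfun n R T (relcomp R G H)"
proof -
  have cr: "\<And>f. f \<in> Ar (amb R) \<Longrightarrow> Dom (amb R) f \<in> Ob (amb R) \<and> Cod (amb R) f \<in> Ob (amb R)"
    "\<And>a. a \<in> Ob (amb R) \<Longrightarrow> Idn (amb R) a \<in> Ar (amb R)"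
    "\<And>f g. f \<in> Ar (amb R) \<Longrightarrow> g \<in> Ar (amb R) \<Longrightarrow> Cod (amb R) f = Dom (amb R) g \<Longrightarrow> Comp (amb R) g f \<in> Ar (amb R)"
    using cR unfolding is_cat_def by blast+
  have cs: "\<And>f. f \<in> Ar (amb S) \<Longrightarrow> Dom (amb S) f \<in> Ob (amb S) \<and> Cod (amb S) f \<in> Ob (amb S)"
    using cS unfolding is_cat_def by blast+
  note g = relfunD[OF G] and h = relfunD[OF H]
  have idG: "\<And>a. a \<in> Ob (amb R) \<Longrightarrow> G (Idn (amb R) a) = Idn (amb S) (Dom (amb S) (G (Idn (amb R) a)))" by (rule g(4))
  have k1: "\<And>f. f \<in> Ar (amb R) \<Longrightarrow> G (Idn (amb R) (Dom (amb R) f)) = Idn (amb S) (Dom (amb S) (G f))"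
    using idG cr g(2) by metis
  have k2: "\<And>f. f \<in> Ar (amb R) \<Longrightarrow> G (Idn (amb R) (Cod (amb R) f)) = Idn (amb S) (Cod (amb S) (G f))"
    using idG cr g(3) by metis
  show ?thesis unfolding is_relfun_def relcomp_def
  proof (intro conjI ballI allI impI)
    fix f assume f: "f \<in> Ar (amb R)"
    show "(if f \<in> Ar (amb R) then H (G f) else undefined) \<in> Ar (amb T)" using f g(1) h(1) by simp
  next
    fix f assume f: "f \<in> Ar (amb R)"
    have i1: "Idn (amb R) (Dom (amb R) f) \<in> Ar (amb R)" using cr f by blast
    show "Dom (amb T) (if f \<in> Ar (amb R) then H (G f) else undefined) =
      Dom (amb T) (if Idn (amb R) (Dom (amb R) f) \<in> Ar (amb R) then H (G (Idn (amb R) (Dom (amb R) f))) else undefined)"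
      using f i1 h(2)[OF g(1)[OF f]] k1[OF f] by simp
  next
    fix f assume f: "f \<in> Ar (amb R)"
    have i1: "Idn (amb R) (Cod (amb R) f) \<in> Ar (amb R)" using cr f by blast
    show "Cod (amb T) (if f \<in> Ar (amb R) then H (G f) else undefined) =
      Dom (amb T) (if Idn (amb R) (Cod (amb R) f) \<in> Ar (amb R) then H (G (Idn (amb R) (Cod (amb R) f))) else undefined)"
      using f i1 h(3)[OF g(1)[OF f]] k2[OF f] by simp
  next
    fix a assume a: "a \<in> Ob (amb R)"
    have i1: "Idn (amb R) a \<in> Ar (amb R)" using cr a by blast
    have b: "Dom (amb S) (G (Idn (amb R) a)) \<in> Ob (amb S)" using cs g(1)[OF i1] by blast
    show "(if Idn (amb R) a \<in> Ar (amb R) then H (G (Idn (amb R) a)) else undefined) =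
       Idn (amb T) (Dom (amb T) (if Idn (amb R) a \<in> Ar (amb R) then H (G (Idn (amb R) a)) else undefined))"
      using i1 idG[OF a] h(4)[OF b] by simp
  next
    fix f g' assume f: "f \<in> Ar (amb R)" and g': "g' \<in> Ar (amb R)" and fg: "Cod (amb R) f = Dom (amb R) g'"
    have c: "Comp (amb R) g' f \<in> Ar (amb R)" using cr f g' fg by blast
    have e: "Cod (amb S) (G f) = Dom (amb S) (G g')" using g(2)[OF g'] g(3)[OF f] fg by simp
    show "(if Comp (amb R) g' f \<in> Ar (amb R) then H (G (Comp (amb R) g' f)) else undefined) =
       Comp (amb T) (if g' \<in> Ar (amb R) then H (G g') else undefined) (if f \<in> Ar (amb R) then H (G f) else undefined)"
      using c f g' g(5)[OF f g' fg] h(5)[OF g(1)[OF f] g(1)[OF g'] e] by simp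
  next
    fix f assume f: "f \<in> W R"
    show "(if f \<in> Ar (amb R) then H (G f) else undefined) \<in> W T" using f WR g(6) h(6) by auto
  next
    fix i f assume i: "i \<in> {1..n}" and f: "f \<in> V R i"
    show "(if f \<in> Ar (amb R) then H (G f) else undefined) \<in> V T i" using f i VR g(7) h(7) by auto
  next
    fix f assume "f \<notin> Ar (amb R)"
    then show "(if f \<in> Ar (amb R) then H (G f) else undefined) = undefined" by simp
  qed
qed

lemma relcat_subs: "is_relcat n R \<Longrightarrow> is_cat (amb R) \<and> W R \<subseteq> Ar (amb R) \<and> (\<forall>i\<in>{1..n}. V R i \<subseteq> Ar (amb R))"
proof -
  assume "is_relcat n R"
  then have "is_cat (amb R)" "is_wide_subcat (amb R) (W R)" "\<forall>i\<in>{1..n}. is_wide_subcat (amb R) (V R i)"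
    unfolding is_relcat_def by blast+
  then show ?thesis unfolding is_wide_subcat_def by blast
qed

lemma relcomp_relfun':
  "is_relcat n R \<Longrightarrow> is_relcat n S \<Longrightarrow> is_relfun n R S G \<Longrightarrow> is_relfun n S T H \<Longrightarrow> is_relfun n R T (relcomp R G H)"
  using relcomp_relfun[of R S n G T H] relcat_subs[of n R] relcat_subs[of n S] by blast

lemma relcomp_id_left: "is_relfun n R S G \<Longrightarrow> relcomp R (relid R) G = G"
  by (rule ext) (simp add: relcomp_def relid_def is_relfun_def)

lemma relcomp_id_right: "is_relfun n R S G \<Longrightarrow> relcomp R G (relid S) = G"
  by (rule ext) (simp add: relcomp_def relid_def is_relfun_def)

theorem part1:
  assumes adj: "is_left_adjoint_of_N n K Km \<Phi>" and X: "is_msset n X"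
  shows "relcat_iso n (K (sk2 n X)) (K X) (Km (sk2 n X) X (msid (sk2 n X)))"
proof -
  note A = adj[unfolded is_left_adjoint_of_N_def]
  note A1 = A[THEN conjunct1, rule_format]
  note A2 = A[THEN conjunct2, THEN conjunct1, rule_format]
  note A3 = A[THEN conjunct2, THEN conjunct2, THEN conjunct1, rule_format]
  note A5 = A[THEN conjunct2, THEN conjunct2, THEN conjunct2, THEN conjunct2, THEN conjunct1, rule_format]
  note A6 = A[THEN conjunct2, THEN conjunct2, THEN conjunct2, THEN conjunct2, THEN conjunct2, THEN conjunct1, rule_format]
  note A7 = A[THEN conjunct2, THEN conjunct2, THEN conjunct2, THEN conjunct2, THEN conjunct2, THEN conjunct2, rule_format]
  define S where "S = sk2 n X"
  define i where "i = msid S"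
  have S: "is_msset n S" unfolding S_def using sk2_msset[OF X] .
  have iS: "is_msmap n S X i" unfolding i_def S_def using sk2_incl[OF X] .
  have KS: "is_relcat n (K S)" using A1[OF S] .
  have KX: "is_relcat n (K X)" using A1[OF X] .
  define G where "G = Km S X i"
  have G: "is_relfun n (K S) (K X) G" unfolding G_def using A2[OF S X iS] .
  have idS: "is_relfun n (K S) (K S) (relid (K S))" using A2[OF S S msid_map[OF S]] A3[OF S] by simp
  have idX: "is_relfun n (K X) (K X) (relid (K X))" using A2[OF X X msid_map[OF X]] A3[OF X] by simp
  define \<eta> where "\<eta> = \<Phi> S (K S) (relid (K S))"
  have \<eta>: "\<eta> \<in> mshom n S (nerve n (K S))" unfolding \<eta>_def using bij_betwE[OF A5[OF S KS]] idS by blast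
  obtain \<eta>' where \<eta>': "\<eta>' \<in> mshom n X (nerve n (K S))" "msrestr S \<eta>' = \<eta>"
    using EXT[OF KS X, of \<eta>] \<eta> unfolding S_def by blast
  define H where "H = inv_into {G. is_relfun n (K X) (K S) G} (\<Phi> X (K S)) \<eta>'"
  have surj: "\<eta>' \<in> \<Phi> X (K S) ` {G. is_relfun n (K X) (K S) G}"
    using A5[OF X KS] \<eta>'(1) unfolding bij_betw_def by blast
  have H: "is_relfun n (K X) (K S) H" unfolding H_def using inv_into_into[OF surj] by blast
  have PH: "\<Phi> X (K S) H = \<eta>'" unfolding H_def using f_inv_into_f[OF surj] .
  have GH: "is_relfun n (K S) (K S) (relcomp (K S) G H)" using relcomp_relfun'[OF KS KX G H] .
  have HG: "is_relfun n (K X) (K X) (relcomp (K X) H G)" using relcomp_relfun'[OF KX KS H G] .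
  have "\<Phi> S (K S) (relcomp (K S) G H) = mscomp S i (\<Phi> X (K S) H)"
    unfolding G_def using A6[OF S X KS iS H] .
  also have "\<dots> = \<Phi> S (K S) (relid (K S))"
    unfolding PH i_def mscomp_msid \<eta>'(2) \<eta>_def ..
  finally have e1: "relcomp (K S) G H = relid (K S)"
    using A5[OF S KS] GH idS unfolding bij_betw_def inj_on_def by blast
  define \<epsilon> where "\<epsilon> = \<Phi> X (K X) (relid (K X))"
  have P1: "\<Phi> X (K X) (relcomp (K X) H G) = mscomp X \<eta>' (nmap n (K S) G)"
    using A7[OF X KS KX H G] PH by simp
  have m1: "\<Phi> X (K X) (relcomp (K X) H G) \<in> mshom n X (nerve n (K X))"
    using bij_betwE[OF A5[OF X KX]] HG by blast
  have m2: "\<epsilon> \<in> mshom n X (nerve n (K X))"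
    unfolding \<epsilon>_def using bij_betwE[OF A5[OF X KX]] idX by blast
  have sub: "\<And>d x. x \<in> Smp S d \<Longrightarrow> x \<in> Smp X d" unfolding S_def using sk2_sub[OF X] by blast
  have "msrestr S (mscomp X \<eta>' (nmap n (K S) G)) = mscomp S \<eta> (nmap n (K S) G)"
    unfolding \<eta>'(2)[symmetric] using sub by (intro ext) (simp add: msrestr_def mscomp_def)
  also have "\<dots> = \<Phi> S (K X) (relcomp (K S) (relid (K S)) G)"
    unfolding \<eta>_def using A7[OF S KS KX idS G] by simp
  also have "\<dots> = \<Phi> S (K X) G" using relcomp_id_left[OF G] by simp
  finally have r1: "msrestr S (\<Phi> X (K X) (relcomp (K X) H G)) = \<Phi> S (K X) G" using P1 by simp
  have "msrestr S \<epsilon> = mscomp S i \<epsilon>" unfolding i_def mscomp_msid ..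
  also have "\<dots> = \<Phi> S (K X) (relcomp (K S) G (relid (K X)))"
    unfolding \<epsilon>_def G_def using A6[OF S X KX iS idX] by simp
  also have "\<dots> = \<Phi> S (K X) G" using relcomp_id_right[OF G] by simp
  finally have r2: "msrestr S \<epsilon> = \<Phi> S (K X) G" .
  have "\<Phi> X (K X) (relcomp (K X) H G) = \<epsilon>"
    using UNIQ[OF X m1 m2] r1 r2 unfolding S_def by simp
  then have e2: "relcomp (K X) H G = relid (K X)"
    using A5[OF X KX] HG idX unfolding bij_betw_def inj_on_def \<epsilon>_def by blast
  show ?thesis unfolding relcat_iso_def S_def[symmetric] i_def[symmetric] G_def[symmetric]
    using G H e1 e2 by blast
qed


theorem mainTheorem3:
  fixes n :: nat
    and K :: "'x msset \<Rightarrow> ('o, 'a) relcat"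
    and Km :: "'x msset \<Rightarrow> 'x msset \<Rightarrow> (nat list \<Rightarrow> 'x \<Rightarrow> 'x) \<Rightarrow> 'a \<Rightarrow> 'a"
    and \<Phi> :: "'x msset \<Rightarrow> ('o, 'a) relcat \<Rightarrow> ('a \<Rightarrow> 'a) \<Rightarrow> nat list \<Rightarrow> 'x \<Rightarrow> (nat list \<times> nat list \<Rightarrow> 'a)"
  assumes "n \<ge> 1"
    and "is_left_adjoint_of_N n K Km \<Phi>"
  shows "(\<forall>X. is_msset n X \<longrightarrow>
            relcat_iso n (K (sk2 n X)) (K X) (Km (sk2 n X) X (msid (sk2 n X))))
       \<and> (\<forall>(C :: ('p, 'b) relcat) (Y :: 'y msset). is_relcat n C \<longrightarrow> is_msset n Y \<longrightarrow>
            bij_betw (msrestr (sk2 n Y)) (mshom n Y (nerve n C))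
                     (mshom n (sk2 n Y) (sk2 n (nerve n C))))"
  using part1[OF assms(2)] part2 by blast

end
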